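(* Let $P,Q$ be standard CCSK$^{\mathrm P}$ processes. If $P\approx_{\mathrm{FR}}Q$ then $P\approx_{\mathrm{KP}}Q$.
   Context: Names $\mathsf N$ with bijection $\overline\cdot$ onto disjoint co-names; $\mathsf L=\mathsf N\cup\overline{\mathsf N}\cup\{\tau\}$ ($\alpha$ over $\mathsf L$, $\lambda$ over $\mathsf L\setminus\{\tau\}$); keys $\mathsf K$ denumerable. CCSK processes $X::=\mathbf 0\mid\alpha.X\mid X\backslash\lambda\mid X+Y\mid X|Y\mid\alpha[k].X$; $\mathrm{keys}(X)$ keys in $X$; standard means no keys. Directions $D\in\{\mathrm L,\mathrm R\}$, $\bar{\mathrm L}=\mathrm R$, $\bar{\mathrm R}=\mathrm L$. Proof keyed labels $\theta::=\upsilon\alpha[k]\mid\upsilon\langle\upsilon_1\lambda[k],\upsilon_2\overline\lambda[k]\rangle$ ($\upsilon,\upsilon_i\in\{|_{\mathrm L},|_{\mathrm R},+_{\mathrm L},+_{\mathrm R}\}^*$), $\ell(\upsilon\alpha[k])=\alpha$, $\ell(\upsilon\langle\cdots\rangle)=\tau$, $\mathrm{key}(\theta)=k$. Forward CCSK$^{\mathrm P}$ transitions: least relation closed under (act) $\alpha.X\xrightarrow{\alpha[k]}\alpha[k].X$ if $\mathrm{keys}(X)=\emptyset$; (pre) $X\xrightarrow\theta X',\mathrm{key}(\theta)\ne k\Rightarrow\alpha[k].X\xrightarrow\theta\alpha[k].X'$; (res) $X\xrightarrow\theta X',\ell(\theta)\notin\{\lambda,\overline\lambda\}\Rightarrow X\backslash\lambda\xrightarrow\theta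 X'\backslash\lambda$; (par) $X\xrightarrow\theta X',\mathrm{key}(\theta)\notin\mathrm{keys}(Y)\Rightarrow X|Y\xrightarrow{|_{\mathrm L}\theta}X'|Y$, $Y|X\xrightarrow{|_{\mathrm R}\theta}Y|X'$; (syn) $X\xrightarrow{\upsilon_1\lambda[k]}X',Y\xrightarrow{\upsilon_2\overline\lambda[k]}Y'\Rightarrow X|Y\xrightarrow{\langle\upsilon_1\lambda[k],\upsilon_2\overline\lambda[k]\rangle}X'|Y'$; (sum) $X\xrightarrow\theta X',\mathrm{keys}(Y)=\emptyset\Rightarrow X+Y\xrightarrow{+_{\mathrm L}\theta}X'+Y$, $Y+X\xrightarrow{+_{\mathrm R}\theta}Y+X'$. Backward transitions: $Y\rightsquigarrow^\theta X$ iff $X\xrightarrow\theta Y$; $\bar t$ the inverse. Paths: sequences of composable transitions; rooted if source cannot do a backward transition; $\mathrm{orig}(X)$ is obtained by erasing all keys. Connected transitions: a path from the source of one to the target of the other. Independence $\iota$ on proof labels: least relation closed under (C1) $+_D\theta\mathrel\iota+_D\theta'$ if $\theta\mathrel\iota\theta'$; (P1) $|_D\theta\mathrel\iota|_D\theta'$ if $\theta\mathrel\iota\theta'$; (P2$_k$) $|_D\theta\mathrel\iota|_{\bar D}\theta'$ if keys differ; (S1) $|_D\theta\mathrel\iota\langle\theta_{\mathrm L},\theta_{\mathrm R}\rangle$ if $\theta\mathrel\iota\theta_D$; (S2) $\langle\theta_{\mathrm L},\theta_{\mathrm R}\rangle\mathrel\iota|_D\theta$ if $\theta_D\mathrel\iota\theta$;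 (S3) $\langle\theta_1,\theta_2\rangle\mathrel\iota\langle\theta_1',\theta_2'\rangle$ if $\theta_1\mathrel\iota\theta_1'$, $\theta_2\mathrel\iota\theta_2'$. On transitions $t\mathrel\iota u$ iff connected and labels $\iota$. Events: $\sim$ is the smallest equivalence with $t\sim t'$ whenever $t:P\to Q$, $u:P\to R$, $u':Q\to S$, $t':R\to S$ ($u'$ with label/direction of $u$, $t'$ of $t$) and $t\mathrel\iota u$; events $[t]$; forward events are classes of forward transitions; $\bar e=[\bar t]$; $\ell(e)$, $\mathrm{key}(e)$ are $\ell$ and key of the label of any $t\in e$. $\sharp(\varepsilon,e)=0$, $\sharp(tr,e)=\sharp(r,e)+1$ if $t\in e$, $-1$ if $t\in\bar e$, unchanged otherwise. $\mathrm{ev}(X)$: forward events $e$ with $\sharp(r,e)>0$ for some rooted path $r$ with target $X$. $\le_X$ on $\mathrm{keys}(X)$ is the reflexive transitive closure of $\mathrm{ord}(X)$: $\mathrm{ord}(\mathbf 0)=\emptyset$, $\mathrm{ord}(\alpha.X)=\mathrm{ord}(X\backslash\lambda)=\mathrm{ord}(X)$, $\mathrm{ord}(X+Y)=\mathrm{ord}(X|Y)=\mathrm{ord}(X)\cup\mathrm{ord}(Y)$, $\mathrm{ord}(\alpha[n].X)=\mathrm{ord}(X)\cup\{n<k\mid k\in\mathrm{keys}(X)\}$. A bijection $f:\mathrm{ev}(X)\to\mathrm{ev}(Y)$ is label preserving if $\ell(e)=\ell(f(e))$, order preserving if $\mathrm{key}(e)\le_X\mathrm{key}(e')\iff\mathrm{key}(f(e))\le_Y\mathrm{key}(f(e'))$.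 KP bisimulation between standard $X,Y$: a set $R$ of triples $(X',Y',f')$ with $(X,Y,\emptyset)\in R$ such that whenever $(X',Y',f')\in R$: $f'$ is a label- and order-preserving bijection $\mathrm{ev}(X')\to\mathrm{ev}(Y')$; every forward $t:X'\to X''$ is matched by a forward $t':Y'\to Y''$ with $(X'',Y'',f'\cup\{[t]\mapsto[t']\})\in R$, and every forward $t':Y'\to Y''$ by a forward $t:X'\to X''$ with $(X'',Y'',f'\cup\{[t]\mapsto[t']\})\in R$. $X\approx_{\mathrm{KP}}Y$ iff there is a KP bisimulation between $\mathrm{orig}(X)$ and $\mathrm{orig}(Y)$ containing $(X,Y,f)$ for some $f$. FR bisimulation between $X$ and $Y$: a relation $R$ on processes with $X\mathrel RY$ such that whenever $X'\mathrel RY'$: each forward $X'\xrightarrow\theta X''$ is matched by a forward $Y'\xrightarrow{\theta'}Y''$ with $\ell(\theta)=\ell(\theta')$, $\mathrm{key}(\theta)=\mathrm{key}(\theta')$ and $X''\mathrel RY''$; symmetrically for forward transitions of $Y'$; and the same two conditions for backward transitions. $X\approx_{\mathrm{FR}}Y$ iff there is an FR bisimulation between $X$ and $Y$. *)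

theory Defs
  imports Main
begin

datatype 'n vis = Nm 'n | CoNm 'n

datatype 'n act = Vis "'n vis" | Tau

fun coname :: "'n vis \<Rightarrow> 'n vis" where
  "coname (Nm a) = CoNm a"
| "coname (CoNm a) = Nm a"

datatype 'n proc =
    Nil
  | Pre "'n act" "'n proc"
  | Res "'n proc" "'n vis"
  | Sum "'n proc" "'n proc"
  | Par "'n proc" "'n proc"
  | KPre "'n act" nat "'n proc"

fun keys :: "'n proc \<Rightarrow> nat set" where
  "keys Nil = {}"
| "keys (Pre a X) = keys X"
| "keys (Res X l) = keys X"
| "keys (Sum X Y) = keys X \<union> keys Y"
| "keys (Par X Y) = keys X \<union> keys Y"
| "keys (KPre a k X) = insert k (keys X)"

definition standard :: "'n proc \<Rightarrow> bool" where
  "standard X \<longleftrightarrow> keys X = {}"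

fun orig :: "'n proc \<Rightarrow> 'n proc" where
  "orig Nil = Nil"
| "orig (Pre a X) = Pre a (orig X)"
| "orig (Res X l) = Res (orig X) l"
| "orig (Sum X Y) = Sum (orig X) (orig Y)"
| "orig (Par X Y) = Par (orig X) (orig Y)"
| "orig (KPre a k X) = Pre a (orig X)"

datatype dir = DL | DR

fun flip :: "dir \<Rightarrow> dir" where
  "flip DL = DR" | "flip DR = DL"

text \<open>Proof keyed labels: the prefix upsilon is represented by nested PPar / PSum.\<close>
datatype 'n plab =
    PAct "'n act" nat
  | PPar dir "'n plab"
  | PSum dir "'n plab"
  | PSyn "'n plab" "'n plab"

fun plab_act :: "'n plab \<Rightarrow> 'n act" where
  "plab_act (PAct a k) = a"
| "plab_act (PPar D th) = plab_act th"
| "plab_act (PSum D th) = plab_act th"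
| "plab_act (PSyn th1 th2) = Tau"

fun pkey :: "'n plab \<Rightarrow> nat" where
  "pkey (PAct a k) = k"
| "pkey (PPar D th) = pkey th"
| "pkey (PSum D th) = pkey th"
| "pkey (PSyn th1 th2) = pkey th1"

text \<open>base_act th = Some (alpha,k) iff th has the form upsilon alpha[k].\<close>
fun base_act :: "'n plab \<Rightarrow> ('n act \<times> nat) option" where
  "base_act (PAct a k) = Some (a, k)"
| "base_act (PPar D th) = base_act th"
| "base_act (PSum D th) = base_act th"
| "base_act (PSyn th1 th2) = None"

fun sel :: "dir \<Rightarrow> 'a \<Rightarrow> 'a \<Rightarrow> 'a" where
  "sel DL x y = x" | "sel DR x y = y"

inductive fwd :: "'n proc \<Rightarrow> 'n plab \<Rightarrow> 'n proc \<Rightarrow> bool" where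
  act: "keys X = {} \<Longrightarrow> fwd (Pre a X) (PAct a k) (KPre a k X)"
| pre: "fwd X th X' \<Longrightarrow> pkey th \<noteq> k \<Longrightarrow> fwd (KPre a k X) th (KPre a k X')"
| res: "fwd X th X' \<Longrightarrow> plab_act th \<noteq> Vis l \<Longrightarrow> plab_act th \<noteq> Vis (coname l)
        \<Longrightarrow> fwd (Res X l) th (Res X' l)"
| parL: "fwd X th X' \<Longrightarrow> pkey th \<notin> keys Y \<Longrightarrow> fwd (Par X Y) (PPar DL th) (Par X' Y)"
| parR: "fwd X th X' \<Longrightarrow> pkey th \<notin> keys Y \<Longrightarrow> fwd (Par Y X) (PPar DR th) (Par Y X')"
| syn: "fwd X th1 X' \<Longrightarrow> fwd Y th2 Y' \<Longrightarrow> base_act th1 = Some (Vis l, k)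
        \<Longrightarrow> base_act th2 = Some (Vis (coname l), k)
        \<Longrightarrow> fwd (Par X Y) (PSyn th1 th2) (Par X' Y')"
| sumL: "fwd X th X' \<Longrightarrow> keys Y = {} \<Longrightarrow> fwd (Sum X Y) (PSum DL th) (Sum X' Y)"
| sumR: "fwd X th X' \<Longrightarrow> keys Y = {} \<Longrightarrow> fwd (Sum Y X) (PSum DR th) (Sum Y X')"

definition bwd :: "'n proc \<Rightarrow> 'n plab \<Rightarrow> 'n proc \<Rightarrow> bool" where
  "bwd Y th X \<longleftrightarrow> fwd X th Y"

type_synonym 'n trans = "'n proc \<times> 'n plab \<times> bool \<times> 'n proc"

definition src :: "'n trans \<Rightarrow> 'n proc" where "src t = fst t"
definition lbl :: "'n trans \<Rightarrow> 'n plab" where "lbl t = fst (snd t)"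
definition isfwd :: "'n trans \<Rightarrow> bool" where "isfwd t = fst (snd (snd t))"
definition tgt :: "'n trans \<Rightarrow> 'n proc" where "tgt t = snd (snd (snd t))"

definition valid :: "'n trans \<Rightarrow> bool" where
  "valid t \<longleftrightarrow> (if isfwd t then fwd (src t) (lbl t) (tgt t) else bwd (src t) (lbl t) (tgt t))"

definition tinv :: "'n trans \<Rightarrow> 'n trans" where
  "tinv t = (tgt t, lbl t, \<not> isfwd t, src t)"

fun chain :: "'n proc \<Rightarrow> 'n trans list \<Rightarrow> 'n proc \<Rightarrow> bool" where
  "chain P [] Q \<longleftrightarrow> P = Q"
| "chain P (t # ts) Q \<longleftrightarrow> valid t \<and> src t = P \<and> chain (tgt t) ts Q"

definition rooted :: "'n proc \<Rightarrow> bool" where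
  "rooted P \<longleftrightarrow> \<not> (\<exists>th X. bwd P th X)"

definition connected :: "'n trans \<Rightarrow> 'n trans \<Rightarrow> bool" where
  "connected t u \<longleftrightarrow> (\<exists>ts. chain (src t) ts (tgt u)) \<or> (\<exists>ts. chain (src u) ts (tgt t))"

inductive indep :: "'n plab \<Rightarrow> 'n plab \<Rightarrow> bool" where
  C1: "indep th th' \<Longrightarrow> indep (PSum D th) (PSum D th')"
| P1: "indep th th' \<Longrightarrow> indep (PPar D th) (PPar D th')"
| P2: "pkey th \<noteq> pkey th' \<Longrightarrow> indep (PPar D th) (PPar (flip D) th')"
| S1: "indep th (sel D thL thR) \<Longrightarrow> indep (PPar D th) (PSyn thL thR)"
| S2: "indep (sel D thL thR) th \<Longrightarrow> indep (PSyn thL thR) (PPar D th)"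
| S3: "indep th1 th1' \<Longrightarrow> indep th2 th2' \<Longrightarrow> indep (PSyn th1 th2) (PSyn th1' th2')"

definition indep_trans :: "'n trans \<Rightarrow> 'n trans \<Rightarrow> bool" where
  "indep_trans t u \<longleftrightarrow> connected t u \<and> indep (lbl t) (lbl u)"

inductive diamond :: "'n trans \<Rightarrow> 'n trans \<Rightarrow> bool" where
  "valid (P, tht, dt, Q) \<Longrightarrow> valid (P, thu, du, R) \<Longrightarrow> valid (Q, thu, du, S)
   \<Longrightarrow> valid (R, tht, dt, S) \<Longrightarrow> indep_trans (P, tht, dt, Q) (P, thu, du, R)
   \<Longrightarrow> diamond (P, tht, dt, Q) (R, tht, dt, S)"

definition tsim :: "'n trans \<Rightarrow> 'n trans \<Rightarrow> bool" where
  "tsim t t' \<longleftrightarrow> valid t \<and> valid t' \<and> equivclp diamond t t'"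

definition eclass :: "'n trans \<Rightarrow> 'n trans set" where
  "eclass t = {t'. tsim t t'}"

definition fwd_event :: "'n trans set \<Rightarrow> bool" where
  "fwd_event e \<longleftrightarrow> (\<exists>t. valid t \<and> isfwd t \<and> e = eclass t)"

definition ev_bar :: "'n trans set \<Rightarrow> 'n trans set" where
  "ev_bar e = eclass (tinv (SOME t. t \<in> e))"

definition ev_lab :: "'n trans set \<Rightarrow> 'n act" where
  "ev_lab e = plab_act (lbl (SOME t. t \<in> e))"

definition ev_key :: "'n trans set \<Rightarrow> nat" where
  "ev_key e = pkey (lbl (SOME t. t \<in> e))"

definition sharp :: "'n trans list \<Rightarrow> 'n trans set \<Rightarrow> int" where
  "sharp ts e = sum_list (map (\<lambda>t. if t \<in> e then 1 else if t \<in> ev_bar e then -1 else 0) ts)"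

definition ev :: "'n proc \<Rightarrow> 'n trans set set" where
  "ev X = {e. fwd_event e \<and> (\<exists>P ts. rooted P \<and> chain P ts X \<and> sharp ts e > 0)}"

fun ord :: "'n proc \<Rightarrow> (nat \<times> nat) set" where
  "ord Nil = {}"
| "ord (Pre a X) = ord X"
| "ord (Res X l) = ord X"
| "ord (Sum X Y) = ord X \<union> ord Y"
| "ord (Par X Y) = ord X \<union> ord Y"
| "ord (KPre a n X) = ord X \<union> {(n, k) | k. k \<in> keys X}"

definition key_le :: "'n proc \<Rightarrow> nat \<Rightarrow> nat \<Rightarrow> bool" where
  "key_le X a b \<longleftrightarrow> a \<in> keys X \<and> b \<in> keys X \<and> (a, b) \<in> (ord X)\<^sup>*"

type_synonym 'n evmap = "('n trans set \<times> 'n trans set) set"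

definition bij_rel :: "('a \<times> 'b) set \<Rightarrow> 'a set \<Rightarrow> 'b set \<Rightarrow> bool" where
  "bij_rel f A B \<longleftrightarrow> f \<subseteq> A \<times> B \<and> (\<forall>a\<in>A. \<exists>!b. (a, b) \<in> f) \<and> (\<forall>b\<in>B. \<exists>!a. (a, b) \<in> f)"

definition label_pres :: "'n evmap \<Rightarrow> bool" where
  "label_pres f \<longleftrightarrow> (\<forall>(e, d)\<in>f. ev_lab e = ev_lab d)"

definition order_pres :: "'n proc \<Rightarrow> 'n proc \<Rightarrow> 'n evmap \<Rightarrow> bool" where
  "order_pres X Y f \<longleftrightarrow> (\<forall>(e1, d1)\<in>f. \<forall>(e2, d2)\<in>f.
      key_le X (ev_key e1) (ev_key e2) \<longleftrightarrow> key_le Y (ev_key d1) (ev_key d2))"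

definition KP_bisim :: "('n proc \<times> 'n proc \<times> 'n evmap) set \<Rightarrow> 'n proc \<Rightarrow> 'n proc \<Rightarrow> bool" where
  "KP_bisim R X Y \<longleftrightarrow> standard X \<and> standard Y \<and> (X, Y, {}) \<in> R \<and>
    (\<forall>(X', Y', f) \<in> R.
       bij_rel f (ev X') (ev Y') \<and> label_pres f \<and> order_pres X' Y' f \<and>
       (\<forall>th X''. fwd X' th X'' \<longrightarrow>
          (\<exists>th' Y''. fwd Y' th' Y'' \<and>
             (X'', Y'', f \<union> {(eclass (X', th, True, X''), eclass (Y', th', True, Y''))}) \<in> R)) \<and>
       (\<forall>th' Y''. fwd Y' th' Y'' \<longrightarrow>
          (\<exists>th X''. fwd X' th X'' \<and>
             (X'', Y'', f \<union> {(eclass (X', th, True, X''), eclass (Y', th', True, Y''))}) \<in> R)))"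

definition KP_equiv :: "'n proc \<Rightarrow> 'n proc \<Rightarrow> bool" where
  "KP_equiv X Y \<longleftrightarrow> (\<exists>R f. KP_bisim R (orig X) (orig Y) \<and> (X, Y, f) \<in> R)"

definition FR_bisim :: "('n proc \<Rightarrow> 'n proc \<Rightarrow> bool) \<Rightarrow> 'n proc \<Rightarrow> 'n proc \<Rightarrow> bool" where
  "FR_bisim R X Y \<longleftrightarrow> R X Y \<and>
    (\<forall>X' Y'. R X' Y' \<longrightarrow>
      (\<forall>th X''. fwd X' th X'' \<longrightarrow> (\<exists>th' Y''. fwd Y' th' Y'' \<and>
          plab_act th = plab_act th' \<and> pkey th = pkey th' \<and> R X'' Y'')) \<and>
      (\<forall>th' Y''. fwd Y' th' Y'' \<longrightarrow> (\<exists>th X''. fwd X' th X'' \<and>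
          plab_act th = plab_act th' \<and> pkey th = pkey th' \<and> R X'' Y'')) \<and>
      (\<forall>th X''. bwd X' th X'' \<longrightarrow> (\<exists>th' Y''. bwd Y' th' Y'' \<and>
          plab_act th = plab_act th' \<and> pkey th = pkey th' \<and> R X'' Y'')) \<and>
      (\<forall>th' Y''. bwd Y' th' Y'' \<longrightarrow> (\<exists>th X''. bwd X' th X'' \<and>
          plab_act th = plab_act th' \<and> pkey th = pkey th' \<and> R X'' Y'')))"

definition FR_equiv :: "'n proc \<Rightarrow> 'n proc \<Rightarrow> bool" where
  "FR_equiv X Y \<longleftrightarrow> (\<exists>R. FR_bisim R X Y)"

end

theory Submission
  imports Defs
begin

inductive_cases fwdT_KPre: "fwd Z th (KPre a n X)"
inductive_cases fwdT_Res: "fwd Z th (Res X l)"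
inductive_cases fwdT_Sum: "fwd Z th (Sum X Y)"
inductive_cases fwdT_Par: "fwd Z th (Par X Y)"
inductive_cases fwdT_Nil: "fwd Z th Nil"
inductive_cases fwdT_Pre: "fwd Z th (Pre a X)"

lemma keys_finite: "finite (keys X)" by (induction X) auto
lemma ord_sub: "ord X \<subseteq> keys X \<times> keys X" by (induction X) auto
lemma ord_finite: "finite (ord X)"
  using finite_subset[OF ord_sub] keys_finite by blast
lemma keys_empty_ord: "keys X = {} \<Longrightarrow> ord X = {}" using ord_sub by blast

lemma base_act_Some: "base_act th = Some (a,k) \<Longrightarrow> plab_act th = a \<and> pkey th = k"
  by (induction th) auto

lemma fwd_keys: "fwd X th Y \<Longrightarrow> pkey th \<notin> keys X \<and> keys Y = insert (pkey th) (keys X)"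
proof (induction rule: fwd.induct)
  case (syn X th1 X' Y th2 Y' l k)
  then show ?case using base_act_Some[OF syn.hyps(3)] base_act_Some[OF syn.hyps(4)] by auto
qed auto

lemma fwd_ord: "fwd X th Y \<Longrightarrow> ord X \<subseteq> ord Y \<and> ord Y \<subseteq> ord X \<union> keys X \<times> {pkey th}"
proof (induction rule: fwd.induct)
  case (act X a k)
  then show ?case using keys_empty_ord[of X] by auto
next
  case (pre X th X' k a)
  then show ?case using fwd_keys[OF pre.hyps(1)] by auto
next
  case (syn X th1 X' Y th2 Y' l k)
  then show ?case using base_act_Some[OF syn.hyps(3)] base_act_Some[OF syn.hyps(4)] by auto
qed auto

lemma fwd_nout: "fwd X th Y \<Longrightarrow> (pkey th, x) \<notin> ord Y"
  using fwd_ord[of X th Y] fwd_keys[of X th Y] ord_sub[of X] by blast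

lemma fwd_nout_rt: "fwd X th Y \<Longrightarrow> (pkey th, x) \<in> (ord Y)\<^sup>* \<Longrightarrow> x = pkey th"
  by (metis converse_rtranclE fwd_nout)

lemma fwd_down: "fwd X th Y \<Longrightarrow> k \<noteq> pkey th \<Longrightarrow> (x,k) \<in> (ord Y)\<^sup>* \<longleftrightarrow> (x,k) \<in> (ord X)\<^sup>*"
proof
  assume f: "fwd X th Y" and k: "k \<noteq> pkey th"
  show "(x,k) \<in> (ord Y)\<^sup>* \<Longrightarrow> (x,k) \<in> (ord X)\<^sup>*"
  proof (induction rule: converse_rtrancl_induct)
    case base then show ?case by simp
  next
    case (step y z)
    have "z \<noteq> pkey th" using fwd_nout_rt[OF f] step.hyps(2) k by blast
    then have "(y,z) \<in> ord X" using step.hyps(1) fwd_ord[OF f] by auto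
    then show ?case using step.IH by auto
  qed
next
  assume f: "fwd X th Y"
  show "(x,k) \<in> (ord X)\<^sup>* \<Longrightarrow> (x,k) \<in> (ord Y)\<^sup>*"
    using rtrancl_mono[of "ord X" "ord Y"] fwd_ord[OF f] by blast
qed

fun wl :: "'n plab \<Rightarrow> bool" where
  "wl (PAct a k) = True"
| "wl (PPar D th) = wl th"
| "wl (PSum D th) = wl th"
| "wl (PSyn th1 th2) = (wl th1 \<and> wl th2 \<and> pkey th1 = pkey th2)"

lemma fwd_wl: "fwd X th Y \<Longrightarrow> wl th"
proof (induction rule: fwd.induct)
  case (syn X th1 X' Y th2 Y' l k)
  then show ?case using base_act_Some[OF syn.hyps(3)] base_act_Some[OF syn.hyps(4)] by auto
qed auto

lemma sel_cases: "sel D a b = a \<or> sel D a b = b" by (cases D) auto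

lemma indep_key: "indep a b \<Longrightarrow> wl a \<Longrightarrow> wl b \<Longrightarrow> pkey a \<noteq> pkey b"
proof (induction rule: indep.induct)
  case (S1 th D thL thR)
  then show ?case using sel_cases[of D thL thR] by auto
next
  case (S2 D thL thR th)
  then show ?case using sel_cases[of D thL thR] by auto
qed auto

fun erase :: "nat set \<Rightarrow> 'n proc \<Rightarrow> 'n proc" where
  "erase D Nil = Nil"
| "erase D (Pre a X) = Pre a (erase D X)"
| "erase D (Res X l) = Res (erase D X) l"
| "erase D (Sum X Y) = Sum (erase D X) (erase D Y)"
| "erase D (Par X Y) = Par (erase D X) (erase D Y)"
| "erase D (KPre a n X) = (if n \<in> D then KPre a n (erase D X) else Pre a (erase D X))"

definition down :: "'n proc \<Rightarrow> nat \<Rightarrow> nat set" where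
  "down X k = {x. (x,k) \<in> (ord X)\<^sup>*}"

definition restr :: "'n proc \<Rightarrow> nat \<Rightarrow> 'n proc" where
  "restr X k = erase (down X k) X"

lemma erase_id: "keys X \<subseteq> D \<Longrightarrow> erase D X = X" by (induction X) auto

lemma erase_fwd: "fwd X th Y \<Longrightarrow> pkey th \<notin> D \<Longrightarrow> erase D Y = erase D X"
proof (induction rule: fwd.induct)
  case (syn X th1 X' Y th2 Y' l k)
  then show ?case using base_act_Some[OF syn.hyps(3)] base_act_Some[OF syn.hyps(4)] by auto
qed auto

lemma down_fwd: "fwd X th Y \<Longrightarrow> k \<noteq> pkey th \<Longrightarrow> down Y k = down X k"
  unfolding down_def using fwd_down by blast

lemma restr_fwd: "fwd X th Y \<Longrightarrow> k \<noteq> pkey th \<Longrightarrow> restr Y k = restr X k"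
proof -
  assume f: "fwd X th Y" and k: "k \<noteq> pkey th"
  have "pkey th \<notin> down Y k" unfolding down_def using fwd_nout_rt[OF f] k by blast
  then show ?thesis unfolding restr_def using down_fwd[OF f k] erase_fwd[OF f] by simp
qed

fun klab :: "'n proc \<Rightarrow> nat \<Rightarrow> 'n act" where
  "klab Nil k = Tau"
| "klab (Pre a X) k = Tau"
| "klab (Res X l) k = klab X k"
| "klab (Sum X Y) k = (if k \<in> keys X then klab X k else klab Y k)"
| "klab (Par X Y) k = (if k \<in> keys X \<and> k \<in> keys Y then Tau else if k \<in> keys X then klab X k else klab Y k)"
| "klab (KPre a n X) k = (if k = n then a else klab X k)"

fun issync :: "'n proc \<Rightarrow> nat \<Rightarrow> bool" where
  "issync Nil k = False"
| "issync (Pre a X) k = False"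
| "issync (Res X l) k = issync X k"
| "issync (Sum X Y) k = (if k \<in> keys X then issync X k else issync Y k)"
| "issync (Par X Y) k = (if k \<in> keys X \<and> k \<in> keys Y then True else if k \<in> keys X then issync X k else issync Y k)"
| "issync (KPre a n X) k = (if k = n then False else issync X k)"

lemma fwd_klab: "fwd X th Y \<Longrightarrow> klab Y (pkey th) = plab_act th \<and> issync Y (pkey th) = (base_act th = None)
   \<and> (\<forall>k\<in>keys X. klab Y k = klab X k \<and> issync Y k = issync X k)"
proof (induction rule: fwd.induct)
  case (syn X th1 X' Y th2 Y' l k)
  then show ?case using base_act_Some[OF syn.hyps(3)] base_act_Some[OF syn.hyps(4)]
      fwd_keys[OF syn.hyps(1)] fwd_keys[OF syn.hyps(2)] by auto
qed (auto dest: fwd_keys)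

fun okp :: "'n proc \<Rightarrow> bool" where
  "okp Nil = True"
| "okp (Pre a X) = (keys X = {})"
| "okp (Res X l) = (okp X \<and> (\<forall>k\<in>keys X. klab X k \<noteq> Vis l \<and> klab X k \<noteq> Vis (coname l)))"
| "okp (Sum X Y) = (okp X \<and> okp Y \<and> (keys X = {} \<or> keys Y = {}))"
| "okp (Par X Y) = (okp X \<and> okp Y \<and> (\<forall>k\<in>keys X \<inter> keys Y. \<not> issync X k \<and> \<not> issync Y k
      \<and> (\<exists>l. klab X k = Vis l \<and> klab Y k = Vis (coname l))))"
| "okp (KPre a n X) = (okp X \<and> n \<notin> keys X)"

lemma okp_std: "keys X = {} \<Longrightarrow> okp X" by (induction X) auto

lemma fwd_okp: "fwd X th Y \<Longrightarrow> okp X \<Longrightarrow> okp Y"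
proof (induction rule: fwd.induct)
  case (act X a k)
  then show ?case using okp_std[of X] by simp
next
  case (pre X th X' k a)
  then show ?case using fwd_keys[OF pre.hyps(1)] by auto
next
  case (res X th X' l)
  then show ?case using fwd_keys[OF res.hyps(1)] fwd_klab[OF res.hyps(1)] by auto
next
  case (parL X th X' Y)
  have k: "keys X' = insert (pkey th) (keys X)" using fwd_keys[OF parL.hyps(1)] by simp
  have kl: "\<forall>k\<in>keys X. klab X' k = klab X k \<and> issync X' k = issync X k" using fwd_klab[OF parL.hyps(1)] by simp
  have o: "okp X" "okp Y" "\<forall>j\<in>keys X \<inter> keys Y. \<not> issync X j \<and> \<not> issync Y j
      \<and> (\<exists>l. klab X j = Vis l \<and> klab Y j = Vis (coname l))" using parL.prems by auto
  have "\<forall>j\<in>keys X' \<inter> keys Y. \<not> issync X' j \<and> \<not> issync Y j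
      \<and> (\<exists>l. klab X' j = Vis l \<and> klab Y j = Vis (coname l))"
  proof
    fix j assume j: "j \<in> keys X' \<inter> keys Y"
    then have "j \<in> keys X \<inter> keys Y" using k parL.hyps(2) by auto
    then show "\<not> issync X' j \<and> \<not> issync Y j \<and> (\<exists>l. klab X' j = Vis l \<and> klab Y j = Vis (coname l))"
      using o(3) kl by auto
  qed
  then show ?case using parL.IH o by simp
next
  case (parR X th X' Y)
  have k: "keys X' = insert (pkey th) (keys X)" using fwd_keys[OF parR.hyps(1)] by simp
  have kl: "\<forall>k\<in>keys X. klab X' k = klab X k \<and> issync X' k = issync X k" using fwd_klab[OF parR.hyps(1)] by simp
  have o: "okp X" "okp Y" "\<forall>j\<in>keys Y \<inter> keys X. \<not> issync Y j \<and> \<not> issync X j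
      \<and> (\<exists>l. klab Y j = Vis l \<and> klab X j = Vis (coname l))" using parR.prems by auto
  have "\<forall>j\<in>keys Y \<inter> keys X'. \<not> issync Y j \<and> \<not> issync X' j
      \<and> (\<exists>l. klab Y j = Vis l \<and> klab X' j = Vis (coname l))"
  proof
    fix j assume j: "j \<in> keys Y \<inter> keys X'"
    then have "j \<in> keys Y \<inter> keys X" using k parR.hyps(2) by auto
    then show "\<not> issync Y j \<and> \<not> issync X' j \<and> (\<exists>l. klab Y j = Vis l \<and> klab X' j = Vis (coname l))"
      using o(3) kl by auto
  qed
  then show ?case using parR.IH o by simp
next
  case (syn X th1 X' Y th2 Y' l k)
  have b1: "plab_act th1 = Vis l" "pkey th1 = k" using base_act_Some[OF syn.hyps(3)] by auto
  have b2: "plab_act th2 = Vis (coname l)" "pkey th2 = k" using base_act_Some[OF syn.hyps(4)] by auto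
  have k1: "keys X' = insert k (keys X)" "k \<notin> keys X" using fwd_keys[OF syn.hyps(1)] b1 by auto
  have k2: "keys Y' = insert k (keys Y)" "k \<notin> keys Y" using fwd_keys[OF syn.hyps(2)] b2 by auto
  have l1: "klab X' k = Vis l" "\<not> issync X' k" "\<forall>j\<in>keys X. klab X' j = klab X j \<and> issync X' j = issync X j"
    using fwd_klab[OF syn.hyps(1)] b1 syn.hyps(3) by auto
  have l2: "klab Y' k = Vis (coname l)" "\<not> issync Y' k" "\<forall>j\<in>keys Y. klab Y' j = klab Y j \<and> issync Y' j = issync Y j"
    using fwd_klab[OF syn.hyps(2)] b2 syn.hyps(4) by auto
  have o: "okp X" "okp Y" "\<forall>j\<in>keys X \<inter> keys Y. \<not> issync X j \<and> \<not> issync Y j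
      \<and> (\<exists>l. klab X j = Vis l \<and> klab Y j = Vis (coname l))" using syn.prems by auto
  have "\<forall>j\<in>keys X' \<inter> keys Y'. \<not> issync X' j \<and> \<not> issync Y' j
      \<and> (\<exists>l. klab X' j = Vis l \<and> klab Y' j = Vis (coname l))"
  proof
    fix j assume j: "j \<in> keys X' \<inter> keys Y'"
    show "\<not> issync X' j \<and> \<not> issync Y' j \<and> (\<exists>l. klab X' j = Vis l \<and> klab Y' j = Vis (coname l))"
    proof (cases "j = k")
      case True then show ?thesis using l1 l2 by auto
    next
      case False
      then have "j \<in> keys X \<inter> keys Y" using j k1 k2 by auto
      then show ?thesis using o(3) l1(3) l2(3) by auto
    qed
  qed
  then show ?case using syn.IH o by simp
next
  case (sumL X th X' Y)
  then show ?case by auto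
next
  case (sumR X th X' Y)
  then show ?case by auto
qed

lemma fwd_okp_back: "fwd X th Y \<Longrightarrow> okp Y \<Longrightarrow> okp X"
proof (induction rule: fwd.induct)
  case (act X a k)
  then show ?case by simp
next
  case (pre X th X' k a)
  then show ?case using fwd_keys[OF pre.hyps(1)] by auto
next
  case (res X th X' l)
  then show ?case using fwd_keys[OF res.hyps(1)] fwd_klab[OF res.hyps(1)] by auto
next
  case (parL X th X' Y)
  have k: "keys X' = insert (pkey th) (keys X)" using fwd_keys[OF parL.hyps(1)] by simp
  have kl: "\<forall>k\<in>keys X. klab X' k = klab X k \<and> issync X' k = issync X k" using fwd_klab[OF parL.hyps(1)] by simp
  have o: "okp X'" "okp Y" "\<forall>j\<in>keys X' \<inter> keys Y. \<not> issync X' j \<and> \<not> issync Y j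
      \<and> (\<exists>l. klab X' j = Vis l \<and> klab Y j = Vis (coname l))" using parL.prems by auto
  have "\<forall>j\<in>keys X \<inter> keys Y. \<not> issync X j \<and> \<not> issync Y j
      \<and> (\<exists>l. klab X j = Vis l \<and> klab Y j = Vis (coname l))"
  proof
    fix j assume j: "j \<in> keys X \<inter> keys Y"
    then have "j \<in> keys X' \<inter> keys Y" using k by auto
    then have a: "\<not> issync X' j \<and> \<not> issync Y j \<and> (\<exists>l. klab X' j = Vis l \<and> klab Y j = Vis (coname l))"
      using o(3) by blast
    have "klab X' j = klab X j" "issync X' j = issync X j" using kl j by auto
    then show "\<not> issync X j \<and> \<not> issync Y j \<and> (\<exists>l. klab X j = Vis l \<and> klab Y j = Vis (coname l))"
      using a by metis
  qed
  then show ?case using parL.IH o by simp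
next
  case (parR X th X' Y)
  have k: "keys X' = insert (pkey th) (keys X)" using fwd_keys[OF parR.hyps(1)] by simp
  have kl: "\<forall>k\<in>keys X. klab X' k = klab X k \<and> issync X' k = issync X k" using fwd_klab[OF parR.hyps(1)] by simp
  have o: "okp X'" "okp Y" "\<forall>j\<in>keys Y \<inter> keys X'. \<not> issync Y j \<and> \<not> issync X' j
      \<and> (\<exists>l. klab Y j = Vis l \<and> klab X' j = Vis (coname l))" using parR.prems by auto
  have "\<forall>j\<in>keys Y \<inter> keys X. \<not> issync Y j \<and> \<not> issync X j
      \<and> (\<exists>l. klab Y j = Vis l \<and> klab X j = Vis (coname l))"
  proof
    fix j assume j: "j \<in> keys Y \<inter> keys X"
    then have "j \<in> keys Y \<inter> keys X'" using k by auto
    then have a: "\<not> issync Y j \<and> \<not> issync X' j \<and> (\<exists>l. klab Y j = Vis l \<and> klab X' j = Vis (coname l))"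
      using o(3) by blast
    have "klab X' j = klab X j" "issync X' j = issync X j" using kl j by auto
    then show "\<not> issync Y j \<and> \<not> issync X j \<and> (\<exists>l. klab Y j = Vis l \<and> klab X j = Vis (coname l))"
      using a by metis
  qed
  then show ?case using parR.IH o by simp
next
  case (syn X th1 X' Y th2 Y' l k)
  have k1: "keys X' = insert (pkey th1) (keys X)" using fwd_keys[OF syn.hyps(1)] by auto
  have k2: "keys Y' = insert (pkey th2) (keys Y)" using fwd_keys[OF syn.hyps(2)] by auto
  have l1: "\<forall>j\<in>keys X. klab X' j = klab X j \<and> issync X' j = issync X j"
    using fwd_klab[OF syn.hyps(1)] by auto
  have l2: "\<forall>j\<in>keys Y. klab Y' j = klab Y j \<and> issync Y' j = issync Y j"
    using fwd_klab[OF syn.hyps(2)] by auto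
  have o: "okp X'" "okp Y'" "\<forall>j\<in>keys X' \<inter> keys Y'. \<not> issync X' j \<and> \<not> issync Y' j
      \<and> (\<exists>l. klab X' j = Vis l \<and> klab Y' j = Vis (coname l))" using syn.prems by auto
  have "\<forall>j\<in>keys X \<inter> keys Y. \<not> issync X j \<and> \<not> issync Y j
      \<and> (\<exists>l. klab X j = Vis l \<and> klab Y j = Vis (coname l))"
  proof
    fix j assume j: "j \<in> keys X \<inter> keys Y"
    then have "j \<in> keys X' \<inter> keys Y'" using k1 k2 by auto
    then have a: "\<not> issync X' j \<and> \<not> issync Y' j \<and> (\<exists>l. klab X' j = Vis l \<and> klab Y' j = Vis (coname l))"
      using o(3) by blast
    have "klab X' j = klab X j" "issync X' j = issync X j" "klab Y' j = klab Y j" "issync Y' j = issync Y j"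
      using l1 l2 j by auto
    then show "\<not> issync X j \<and> \<not> issync Y j \<and> (\<exists>l. klab X j = Vis l \<and> klab Y j = Vis (coname l))"
      using a by metis
  qed
  then show ?case using syn.IH o by simp
next
  case (sumL X th X' Y)
  then show ?case by auto
next
  case (sumR X th X' Y)
  then show ?case by auto
qed

lemma acyc_ext:
  assumes "acyclic r" "r' \<subseteq> r \<union> UNIV \<times> {k}" "\<forall>x. (k,x) \<notin> r'"
  shows "acyclic r'"
proof -
  have a: "(a,b) \<in> r'\<^sup>+ \<Longrightarrow> (a,b) \<in> r\<^sup>+ \<or> b = k" for a b
  proof (induction rule: trancl_induct)
    case (base y) then show ?case using assms(2) by auto
  next
    case (step y z)
    then have "y \<noteq> k" using assms(3) by auto
    then have "(a,y) \<in> r\<^sup>+" using step.IH by auto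
    then show ?case using step.hyps(2) assms(2) by auto
  qed
  show ?thesis unfolding acyclic_def
  proof
    fix x show "(x,x) \<notin> r'\<^sup>+"
    proof
      assume xx: "(x,x) \<in> r'\<^sup>+"
      show False
      proof (cases "x = k")
        case True then show False using xx assms(3) by (metis tranclD)
      next
        case False then show False using a[OF xx] assms(1) unfolding acyclic_def by auto
      qed
    qed
  qed
qed

lemma acyc_fwd: "fwd X th Y \<Longrightarrow> acyclic (ord X) \<Longrightarrow> acyclic (ord Y)"
proof -
  assume f: "fwd X th Y" and a: "acyclic (ord X)"
  have "ord Y \<subseteq> ord X \<union> UNIV \<times> {pkey th}" using fwd_ord[OF f] by blast
  then show ?thesis using acyc_ext[OF a] fwd_nout[OF f] by blast
qed

lemma acyc_back: "fwd X th Y \<Longrightarrow> acyclic (ord Y) \<Longrightarrow> acyclic (ord X)"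
proof -
  assume f: "fwd X th Y" and a: "acyclic (ord Y)"
  have "ord X \<subseteq> ord Y" using fwd_ord[OF f] by blast
  then show ?thesis using acyclic_subset[OF a] by blast
qed

definition Inv :: "'n proc \<Rightarrow> bool" where
  "Inv X \<longleftrightarrow> okp X \<and> acyclic (ord X)"

lemma Inv_fwd: "fwd X th Y \<Longrightarrow> Inv X \<Longrightarrow> Inv Y"
  unfolding Inv_def using fwd_okp[of X th Y] acyc_fwd[of X th Y] by blast
lemma Inv_back: "fwd X th Y \<Longrightarrow> Inv Y \<Longrightarrow> Inv X"
  unfolding Inv_def using fwd_okp_back[of X th Y] acyc_back[of X th Y] by blast
lemma Inv_std: "keys X = {} \<Longrightarrow> Inv X"
  unfolding Inv_def using okp_std[of X] keys_empty_ord[of X] by (simp add: acyclic_def)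

lemma removal: "okp X \<Longrightarrow> k \<in> keys X \<Longrightarrow> \<forall>x. (k,x) \<notin> ord X \<Longrightarrow>
  \<exists>X' th. fwd X' th X \<and> pkey th = k \<and> plab_act th = klab X k
     \<and> base_act th = (if issync X k then None else Some (klab X k, k))"
proof (induction X)
  case Nil then show ?case by simp
next
  case (Pre a X) then show ?case by simp
next
  case (Res X l)
  have o: "okp X" "\<forall>x. (k,x) \<notin> ord X" "k \<in> keys X" using Res.prems by simp_all
  obtain X' th where h: "fwd X' th X" "pkey th = k" "plab_act th = klab X k"
     "base_act th = (if issync X k then None else Some (klab X k, k))" using Res.IH[OF o(1,3,2)] by blast
  have "klab X k \<noteq> Vis l" "klab X k \<noteq> Vis (coname l)" using Res.prems(1) o(3) by auto
  then have "fwd (Res X' l) th (Res X l)" using fwd.res[OF h(1)] h(3) by simp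
  then show ?case using h by (intro exI[of _ "Res X' l"] exI[of _ th]) simp
next
  case (Sum X Y)
  have o0: "okp X \<and> okp Y \<and> (keys X = {} \<or> keys Y = {})" using Sum.prems(1) by simp
  have o: "okp X" "okp Y" "\<forall>x. (k,x) \<notin> ord X" "\<forall>x. (k,x) \<notin> ord Y" using o0 Sum.prems(3) by simp_all
  show ?case
  proof (cases "k \<in> keys X")
    case True
    then have ky: "keys Y = {}" using o0 by auto
    obtain X' th where h: "fwd X' th X" "pkey th = k" "plab_act th = klab X k"
     "base_act th = (if issync X k then None else Some (klab X k, k))" using Sum.IH(1)[OF o(1) True o(3)] by blast
    have "fwd (Sum X' Y) (PSum DL th) (Sum X Y)" using fwd.sumL[OF h(1) ky] .
    then show ?thesis using h True by (intro exI[of _ "Sum X' Y"] exI[of _ "PSum DL th"]) simp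
  next
    case False
    then have ky: "keys X = {}" "k \<in> keys Y" using o0 Sum.prems(2) by auto
    obtain X' th where h: "fwd X' th Y" "pkey th = k" "plab_act th = klab Y k"
     "base_act th = (if issync Y k then None else Some (klab Y k, k))" using Sum.IH(2)[OF o(2) ky(2) o(4)] by blast
    have "fwd (Sum X X') (PSum DR th) (Sum X Y)" using fwd.sumR[OF h(1) ky(1)] .
    then show ?thesis using h False by (intro exI[of _ "Sum X X'"] exI[of _ "PSum DR th"]) simp
  qed
next
  case (Par X Y)
  have o: "okp X" "okp Y" "\<forall>x. (k,x) \<notin> ord X" "\<forall>x. (k,x) \<notin> ord Y" using Par.prems(1) Par.prems(3) by simp_all
  show ?case
  proof (cases "k \<in> keys X \<and> k \<in> keys Y")
    case True
    have "\<forall>j\<in>keys X \<inter> keys Y. \<not> issync X j \<and> \<not> issync Y j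
      \<and> (\<exists>l. klab X j = Vis l \<and> klab Y j = Vis (coname l))" using Par.prems(1) by simp
    then obtain l where l: "\<not> issync X k" "\<not> issync Y k" "klab X k = Vis l" "klab Y k = Vis (coname l)"
      using True by blast
    obtain X' th1 where h1: "fwd X' th1 X" "pkey th1 = k"
     "base_act th1 = (if issync X k then None else Some (klab X k, k))" using Par.IH(1)[OF o(1) _ o(3)] True by blast
    obtain Y' th2 where h2: "fwd Y' th2 Y" "pkey th2 = k"
     "base_act th2 = (if issync Y k then None else Some (klab Y k, k))" using Par.IH(2)[OF o(2) _ o(4)] True by blast
    have b: "base_act th1 = Some (Vis l, k)" "base_act th2 = Some (Vis (coname l), k)" using h1 h2 l by simp_all
    have "fwd (Par X' Y') (PSyn th1 th2) (Par X Y)" using fwd.syn[OF h1(1) h2(1) b] .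
    then show ?thesis using h1 True by (intro exI[of _ "Par X' Y'"] exI[of _ "PSyn th1 th2"]) simp
  next
    case False
    show ?thesis
    proof (cases "k \<in> keys X")
      case True
      then have ky: "k \<notin> keys Y" using False by auto
      obtain X' th where h: "fwd X' th X" "pkey th = k" "plab_act th = klab X k"
       "base_act th = (if issync X k then None else Some (klab X k, k))" using Par.IH(1)[OF o(1) True o(3)] by blast
      have "fwd (Par X' Y) (PPar DL th) (Par X Y)" using fwd.parL[OF h(1)] h(2) ky by simp
      then show ?thesis using h True ky by (intro exI[of _ "Par X' Y"] exI[of _ "PPar DL th"]) simp
    next
      case F2: False
      then have ky: "k \<in> keys Y" using Par.prems(2) by simp
      obtain X' th where h: "fwd X' th Y" "pkey th = k" "plab_act th = klab Y k"
       "base_act th = (if issync Y k then None else Some (klab Y k, k))" using Par.IH(2)[OF o(2) ky o(4)] by blast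
      have "fwd (Par X X') (PPar DR th) (Par X Y)" using fwd.parR[OF h(1)] h(2) F2 by simp
      then show ?thesis using h F2 by (intro exI[of _ "Par X X'"] exI[of _ "PPar DR th"]) simp
    qed
  qed
next
  case (KPre a n X)
  show ?case
  proof (cases "k = n")
    case True
    have "keys X = {}"
    proof (rule ccontr)
      assume "keys X \<noteq> {}"
      then obtain x where "x \<in> keys X" by blast
      then have "(n,x) \<in> ord (KPre a n X)" by simp
      then show False using KPre.prems(3) True by blast
    qed
    then have "fwd (Pre a X) (PAct a n) (KPre a n X)" by (rule fwd.act)
    then show ?thesis using True by (intro exI[of _ "Pre a X"] exI[of _ "PAct a n"]) simp
  next
    case False
    have o: "okp X" "\<forall>x. (k,x) \<notin> ord X" "k \<in> keys X" using KPre.prems(1) KPre.prems(3) KPre.prems(2) False by simp_all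
    obtain X' th where h: "fwd X' th X" "pkey th = k" "plab_act th = klab X k"
       "base_act th = (if issync X k then None else Some (klab X k, k))" using KPre.IH[OF o(1,3,2)] by blast
    have "fwd (KPre a n X') th (KPre a n X)" using fwd.pre[OF h(1)] h(2) False by simp
    then show ?thesis using h False by (intro exI[of _ "KPre a n X'"] exI[of _ th]) simp
  qed
qed

lemma exists_max: "acyclic r \<Longrightarrow> finite r \<Longrightarrow> x \<in> S \<Longrightarrow> \<exists>z\<in>S. \<forall>y. (z,y) \<in> r \<longrightarrow> y \<notin> S"
proof -
  assume a: "acyclic r" "finite r" "x \<in> S"
  have w: "wf (r\<inverse>)" using finite_acyclic_wf_converse[OF a(2,1)] .
  obtain z where "z \<in> S" "\<And>y. (y,z) \<in> r\<inverse> \<Longrightarrow> y \<notin> S" using wfE_min[OF w a(3)] by metis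
  then show ?thesis by auto
qed

lemma rooted_std: "rooted X \<Longrightarrow> Inv X \<Longrightarrow> keys X = {}"
proof (rule ccontr)
  assume r: "rooted X" and i: "Inv X" and ne: "keys X \<noteq> {}"
  then obtain k0 where "k0 \<in> keys X" by auto
  then obtain z where z: "z \<in> keys X" "\<forall>y. (z,y) \<in> ord X \<longrightarrow> y \<notin> keys X"
    using exists_max[of "ord X" k0 "keys X"] i ord_finite unfolding Inv_def by blast
  have "\<forall>x. (z,x) \<notin> ord X" using z ord_sub by blast
  then obtain X' th where "fwd X' th X" using removal[of X z] i z unfolding Inv_def by blast
  then show False using r unfolding rooted_def bwd_def by blast
qed

inductive_cases fwdS_KPre: "fwd (KPre a n X) th B"
inductive_cases fwdS_Res: "fwd (Res X l) th B"
inductive_cases fwdS_Sum: "fwd (Sum X Y) th B"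
inductive_cases fwdS_Par: "fwd (Par X Y) th B"

lemma base_key: "base_act th = Some (a,k) \<Longrightarrow> pkey th = k" using base_act_Some by blast

lemma fwd_bdet: "fwd A th C \<Longrightarrow> fwd A' th' C \<Longrightarrow> pkey th = pkey th' \<Longrightarrow> A = A' \<and> th = th'"
proof (induction arbitrary: A' th' rule: fwd.induct)
  case (act X a k)
  from act.prems(1) show ?case
  proof (cases rule: fwdT_KPre[consumes 1])
    case 1 show ?thesis using 1 by simp
  next
    case (2 X0) show ?thesis using 2 act.prems(2) by simp
  qed
next
  case (pre X th X' k a)
  from pre.prems(1) show ?case
  proof (cases rule: fwdT_KPre[consumes 1])
    case 1 show ?thesis using 1 pre.prems(2) pre.hyps(2) by simp
  next
    case (2 X0) show ?thesis using 2 pre.prems(2) pre.IH by blast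
  qed
next
  case (res X th X' l)
  from res.prems(1) show ?case
  proof (cases rule: fwdT_Res[consumes 1])
    case (1 X0) show ?thesis using 1 res.prems(2) res.IH by blast
  qed
next
  case (parL X th X' Y)
  from parL.prems(1) show ?case
  proof (cases rule: fwdT_Par[consumes 1])
    case (1 X0 t) show ?thesis using 1 parL.prems(2) parL.IH by simp
  next
    case (2 Y0 t)
    then have "pkey t \<in> keys Y" using fwd_keys by blast
    then show ?thesis using 2 parL.prems(2) parL.hyps(2) by simp
  next
    case (3 X0 t1 Y0 t2 l k)
    then have "pkey t2 \<in> keys Y" using fwd_keys by blast
    moreover have "pkey t1 = k" "pkey t2 = k" using 3 base_key by blast+
    ultimately show ?thesis using 3 parL.prems(2) parL.hyps(2) by simp
  qed
next
  case (parR X th X' Y)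
  from parR.prems(1) show ?case
  proof (cases rule: fwdT_Par[consumes 1])
    case (1 Y0 t)
    then have "pkey t \<in> keys Y" using fwd_keys by blast
    then show ?thesis using 1 parR.prems(2) parR.hyps(2) by simp
  next
    case (2 X0 t) show ?thesis using 2 parR.prems(2) parR.IH by simp
  next
    case (3 X0 t1 Y0 t2 l k)
    then have "pkey t1 \<in> keys Y" using fwd_keys by blast
    moreover have "pkey t1 = k" "pkey t2 = k" using 3 base_key by blast+
    ultimately show ?thesis using 3 parR.prems(2) parR.hyps(2) by simp
  qed
next
  case (syn X th1 X' Y th2 Y' l k)
  have k1: "pkey th1 = k" "pkey th2 = k" using syn.hyps(3,4) base_key by blast+
  from syn.prems(1) show ?case
  proof (cases rule: fwdT_Par[consumes 1])
    case (1 X0 t)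
    have "pkey th2 \<in> keys Y'" using fwd_keys[OF syn.hyps(2)] by blast
    then show ?thesis using 1 syn.prems(2) k1 by simp
  next
    case (2 Y0 t)
    have "pkey th1 \<in> keys X'" using fwd_keys[OF syn.hyps(1)] by blast
    then show ?thesis using 2 syn.prems(2) k1 by simp
  next
    case (3 X0 t1 Y0 t2 l' k')
    have "pkey t1 = k'" "pkey t2 = k'" using 3 base_key by blast+
    then have "k' = k" using syn.prems(2) 3 k1 by simp
    then show ?thesis using 3 syn.IH k1 \<open>pkey t1 = k'\<close> \<open>pkey t2 = k'\<close> by metis
  qed
next
  case (sumL X th X' Y)
  from sumL.prems(1) show ?case
  proof (cases rule: fwdT_Sum[consumes 1])
    case (1 X0 t) show ?thesis using 1 sumL.prems(2) sumL.IH by simp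
  next
    case (2 Y0 t)
    then have "pkey t \<in> keys Y" using fwd_keys by blast
    then show ?thesis using sumL.hyps(2) by simp
  qed
next
  case (sumR X th X' Y)
  from sumR.prems(1) show ?case
  proof (cases rule: fwdT_Sum[consumes 1])
    case (1 X0 t)
    then have "pkey t \<in> keys Y" using fwd_keys by blast
    then show ?thesis using sumR.hyps(2) by simp
  next
    case (2 Y0 t) show ?thesis using 2 sumR.prems(2) sumR.IH by simp
  qed
qed

lemma fwd_key_in: "fwd X th Y \<Longrightarrow> pkey th \<in> keys Y" using fwd_keys by blast
lemma fwd_key_notin: "fwd X th Y \<Longrightarrow> pkey th \<notin> keys X" using fwd_keys by blast
lemma fwd_keys_sub: "fwd X th Y \<Longrightarrow> keys X \<subseteq> keys Y" using fwd_keys by blast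

lemma square: "fwd A' lam A \<Longrightarrow> fwd A th B \<Longrightarrow> (\<forall>x. (pkey lam, x) \<notin> ord B) \<Longrightarrow>
   \<exists>B'. fwd A' th B' \<and> fwd B' lam B \<and> indep th lam"
proof (induction A arbitrary: A' lam B th)
  case Nil then show ?case by (auto elim: fwdT_Nil)
next
  case (Pre a X) then show ?case by (auto elim: fwdT_Pre)
next
  case (KPre a n X)
  from KPre.prems(2) show ?case
  proof (cases rule: fwdS_KPre[consumes 1])
    case (1 X1)
    from KPre.prems(1) show ?thesis
    proof (cases rule: fwdT_KPre[consumes 1])
      case 1
      have "pkey th \<in> keys X1" using fwd_key_in[OF \<open>fwd X th X1\<close>] .
      then have "(n, pkey th) \<in> ord B" using \<open>B = KPre a n X1\<close> by simp
      then show ?thesis using KPre.prems(3) \<open>lam = PAct a n\<close> by simp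
    next
      case (2 X0)
      have no: "\<forall>x. (pkey lam, x) \<notin> ord X1" using KPre.prems(3) \<open>B = KPre a n X1\<close> by simp
      obtain X0' where h: "fwd X0 th X0'" "fwd X0' lam X1" "indep th lam"
        using KPre.IH[OF \<open>fwd X0 lam X\<close> \<open>fwd X th X1\<close> no] by blast
      have "fwd A' th (KPre a n X0')" using fwd.pre[OF h(1)] 1 2 by simp
      moreover have "fwd (KPre a n X0') lam B" using fwd.pre[OF h(2)] 1 2 by simp
      ultimately show ?thesis using h(3) by blast
    qed
  qed
next
  case (Res X l)
  from Res.prems(2) show ?case
  proof (cases rule: fwdS_Res[consumes 1])
    case (1 X1)
    from Res.prems(1) show ?thesis
    proof (cases rule: fwdT_Res[consumes 1])
      case (1 X0)
      note c1 = \<open>B = Res X1 l\<close> \<open>fwd X th X1\<close> \<open>plab_act th \<noteq> Vis l\<close> \<open>plab_act th \<noteq> Vis (coname l)\<close>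
      have no: "\<forall>x. (pkey lam, x) \<notin> ord X1" using Res.prems(3) c1 by simp
      obtain X0' where h: "fwd X0 th X0'" "fwd X0' lam X1" "indep th lam"
        using Res.IH[OF \<open>fwd X0 lam X\<close> \<open>fwd X th X1\<close> no] by blast
      have "fwd A' th (Res X0' l)" using fwd.res[OF h(1)] 1 c1 by simp
      moreover have "fwd (Res X0' l) lam B" using fwd.res[OF h(2)] 1 c1 by simp
      ultimately show ?thesis using h(3) by blast
    qed
  qed
next
  case (Sum X Y)
  from Sum.prems(1) show ?case
  proof (cases rule: fwdT_Sum[consumes 1])
    case (1 X0 l')
    from Sum.prems(2) show ?thesis
    proof (cases rule: fwdS_Sum[consumes 1])
      case (1 t' X1)
      have no: "\<forall>x. (pkey l', x) \<notin> ord X1" using Sum.prems(3) \<open>B = Sum X1 Y\<close> \<open>lam = PSum DL l'\<close> by simp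
      obtain X0' where h: "fwd X0 t' X0'" "fwd X0' l' X1" "indep t' l'"
        using Sum.IH(1)[OF \<open>fwd X0 l' X\<close> \<open>fwd X t' X1\<close> no] by blast
      have "fwd A' th (Sum X0' Y)" using fwd.sumL[OF h(1)] \<open>A' = Sum X0 Y\<close> \<open>th = PSum DL t'\<close> \<open>keys Y = {}\<close> by simp
      moreover have "fwd (Sum X0' Y) lam B" using fwd.sumL[OF h(2)] \<open>B = Sum X1 Y\<close> \<open>lam = PSum DL l'\<close> \<open>keys Y = {}\<close> by simp
      moreover have "indep th lam" using indep.C1[OF h(3)] \<open>th = PSum DL t'\<close> \<open>lam = PSum DL l'\<close> by simp
      ultimately show ?thesis by blast
    next
      case (2 t' Y1)
      then show ?thesis using fwd_key_in[OF \<open>fwd X0 l' X\<close>] by simp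
    qed
  next
    case (2 Y0 l')
    from Sum.prems(2) show ?thesis
    proof (cases rule: fwdS_Sum[consumes 1])
      case (1 t' X1)
      then show ?thesis using fwd_key_in[OF \<open>fwd Y0 l' Y\<close>] by simp
    next
      case (2 t' Y1)
      have no: "\<forall>x. (pkey l', x) \<notin> ord Y1" using Sum.prems(3) \<open>B = Sum X Y1\<close> \<open>lam = PSum DR l'\<close> by simp
      obtain Y0' where h: "fwd Y0 t' Y0'" "fwd Y0' l' Y1" "indep t' l'"
        using Sum.IH(2)[OF \<open>fwd Y0 l' Y\<close> \<open>fwd Y t' Y1\<close> no] by blast
      have "fwd A' th (Sum X Y0')" using fwd.sumR[OF h(1)] \<open>A' = Sum X Y0\<close> \<open>th = PSum DR t'\<close> \<open>keys X = {}\<close> by simp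
      moreover have "fwd (Sum X Y0') lam B" using fwd.sumR[OF h(2)] \<open>B = Sum X Y1\<close> \<open>lam = PSum DR l'\<close> \<open>keys X = {}\<close> by simp
      moreover have "indep th lam" using indep.C1[OF h(3)] \<open>th = PSum DR t'\<close> \<open>lam = PSum DR l'\<close> by simp
      ultimately show ?thesis by blast
    qed
  qed
next
  case (Par X Y)
  have mk: "pkey lam \<noteq> pkey th"
  proof -
    have "pkey lam \<in> keys (Par X Y)" using fwd_key_in[OF Par.prems(1)] .
    moreover have "pkey th \<notin> keys (Par X Y)" using fwd_key_notin[OF Par.prems(2)] .
    ultimately show ?thesis by auto
  qed
  from Par.prems(1) show ?case
  proof (cases rule: fwdT_Par[consumes 1])
    case (1 X0 l')
    note L = 1
    from Par.prems(2) show ?thesis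
    proof (cases rule: fwdS_Par[consumes 1])
      case (1 t' X1)
      have no: "\<forall>x. (pkey l', x) \<notin> ord X1" using Par.prems(3) 1 L by simp
      obtain X0' where h: "fwd X0 t' X0'" "fwd X0' l' X1" "indep t' l'"
        using Par.IH(1)[OF \<open>fwd X0 l' X\<close> \<open>fwd X t' X1\<close> no] by blast
      have "fwd A' th (Par X0' Y)" using fwd.parL[OF h(1)] 1 L by simp
      moreover have "fwd (Par X0' Y) lam B" using fwd.parL[OF h(2)] 1 L by simp
      moreover have "indep th lam" using indep.P1[OF h(3)] 1 L by simp
      ultimately show ?thesis by blast
    next
      case (2 t' Y1)
      have a: "pkey t' \<notin> keys X0" using fwd_keys_sub[OF \<open>fwd X0 l' X\<close>] 2 by auto
      have b: "pkey l' \<notin> keys Y1" using fwd_keys[OF \<open>fwd Y t' Y1\<close>] L 2 mk by auto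
      have "fwd A' th (Par X0 Y1)" using fwd.parR[OF \<open>fwd Y t' Y1\<close> a] 2 L by simp
      moreover have "fwd (Par X0 Y1) lam B" using fwd.parL[OF \<open>fwd X0 l' X\<close> b] 2 L by simp
      moreover have "indep th lam" using indep.P2[of t' l' DR] mk 2 L by simp
      ultimately show ?thesis by blast
    next
      case (3 t1 X1 t2 Y1 l k)
      have no: "\<forall>x. (pkey l', x) \<notin> ord X1" using Par.prems(3) 3 L by simp
      obtain X0' where h: "fwd X0 t1 X0'" "fwd X0' l' X1" "indep t1 l'"
        using Par.IH(1)[OF \<open>fwd X0 l' X\<close> \<open>fwd X t1 X1\<close> no] by blast
      have b: "pkey l' \<notin> keys Y1" using fwd_keys[OF \<open>fwd Y t2 Y1\<close>] L 3 mk base_key[OF \<open>base_act t1 = Some (Vis l, k)\<close>] base_key[OF \<open>base_act t2 = Some (Vis (coname l), k)\<close>] by auto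
      have "fwd A' th (Par X0' Y1)" using fwd.syn[OF h(1) \<open>fwd Y t2 Y1\<close>] 3 L by simp
      moreover have "fwd (Par X0' Y1) lam B" using fwd.parL[OF h(2) b] 3 L by simp
      moreover have "indep th lam" using indep.S2[of DL t1 t2 l'] h(3) 3 L by simp
      ultimately show ?thesis by blast
    qed
  next
    case (2 Y0 l')
    note L = 2
    from Par.prems(2) show ?thesis
    proof (cases rule: fwdS_Par[consumes 1])
      case (1 t' X1)
      have a: "pkey t' \<notin> keys Y0" using fwd_keys_sub[OF \<open>fwd Y0 l' Y\<close>] 1 by auto
      have b: "pkey l' \<notin> keys X1" using fwd_keys[OF \<open>fwd X t' X1\<close>] L 1 mk by auto
      have "fwd A' th (Par X1 Y0)" using fwd.parL[OF \<open>fwd X t' X1\<close> a] 1 L by simp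
      moreover have "fwd (Par X1 Y0) lam B" using fwd.parR[OF \<open>fwd Y0 l' Y\<close> b] 1 L by simp
      moreover have "indep th lam" using indep.P2[of t' l' DL] mk 1 L by simp
      ultimately show ?thesis by blast
    next
      case (2 t' Y1)
      have no: "\<forall>x. (pkey l', x) \<notin> ord Y1" using Par.prems(3) 2 L by simp
      obtain Y0' where h: "fwd Y0 t' Y0'" "fwd Y0' l' Y1" "indep t' l'"
        using Par.IH(2)[OF \<open>fwd Y0 l' Y\<close> \<open>fwd Y t' Y1\<close> no] by blast
      have "fwd A' th (Par X Y0')" using fwd.parR[OF h(1)] 2 L by simp
      moreover have "fwd (Par X Y0') lam B" using fwd.parR[OF h(2)] 2 L by simp
      moreover have "indep th lam" using indep.P1[OF h(3)] 2 L by simp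
      ultimately show ?thesis by blast
    next
      case (3 t1 X1 t2 Y1 l k)
      have no: "\<forall>x. (pkey l', x) \<notin> ord Y1" using Par.prems(3) 3 L by simp
      obtain Y0' where h: "fwd Y0 t2 Y0'" "fwd Y0' l' Y1" "indep t2 l'"
        using Par.IH(2)[OF \<open>fwd Y0 l' Y\<close> \<open>fwd Y t2 Y1\<close> no] by blast
      have b: "pkey l' \<notin> keys X1" using fwd_keys[OF \<open>fwd X t1 X1\<close>] L 3 mk base_key[OF \<open>base_act t1 = Some (Vis l, k)\<close>] base_key[OF \<open>base_act t2 = Some (Vis (coname l), k)\<close>] by auto
      have "fwd A' th (Par X1 Y0')" using fwd.syn[OF \<open>fwd X t1 X1\<close> h(1)] 3 L by simp
      moreover have "fwd (Par X1 Y0') lam B" using fwd.parR[OF h(2) b] 3 L by simp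
      moreover have "indep th lam" using indep.S2[of DR t1 t2 l'] h(3) 3 L by simp
      ultimately show ?thesis by blast
    qed
  next
    case (3 X0 l1 Y0 l2 l k)
    note L = 3
    from Par.prems(2) show ?thesis
    proof (cases rule: fwdS_Par[consumes 1])
      case (1 t' X1)
      have no: "\<forall>x. (pkey l1, x) \<notin> ord X1" using Par.prems(3) 1 L by simp
      obtain X0' where h: "fwd X0 t' X0'" "fwd X0' l1 X1" "indep t' l1"
        using Par.IH(1)[OF \<open>fwd X0 l1 X\<close> \<open>fwd X t' X1\<close> no] by blast
      have a: "pkey t' \<notin> keys Y0" using fwd_keys_sub[OF \<open>fwd Y0 l2 Y\<close>] 1 by auto
      have "fwd A' th (Par X0' Y0)" using fwd.parL[OF h(1) a] 1 L by simp
      moreover have "fwd (Par X0' Y0) lam B" using fwd.syn[OF h(2) \<open>fwd Y0 l2 Y\<close>] 1 L by simp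
      moreover have "indep th lam" using indep.S1[of t' DL l1 l2] h(3) 1 L by simp
      ultimately show ?thesis by blast
    next
      case (2 t' Y1)
      have no: "\<forall>x. (pkey l2, x) \<notin> ord Y1" using Par.prems(3) 2 L base_key[OF \<open>base_act l1 = Some (Vis l, k)\<close>] base_key[OF \<open>base_act l2 = Some (Vis (coname l), k)\<close>] by simp
      obtain Y0' where h: "fwd Y0 t' Y0'" "fwd Y0' l2 Y1" "indep t' l2"
        using Par.IH(2)[OF \<open>fwd Y0 l2 Y\<close> \<open>fwd Y t' Y1\<close>] no by blast
      have a: "pkey t' \<notin> keys X0" using fwd_keys_sub[OF \<open>fwd X0 l1 X\<close>] 2 by auto
      have "fwd A' th (Par X0 Y0')" using fwd.parR[OF h(1) a] 2 L by simp
      moreover have "fwd (Par X0 Y0') lam B" using fwd.syn[OF \<open>fwd X0 l1 X\<close> h(2)] 2 L by simp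
      moreover have "indep th lam" using indep.S1[of t' DR l1 l2] h(3) 2 L by simp
      ultimately show ?thesis by blast
    next
      case (3 t1 X1 t2 Y1 l'' k'')
      have no1: "\<forall>x. (pkey l1, x) \<notin> ord X1" using Par.prems(3) 3 L by simp
      have no2: "\<forall>x. (pkey l2, x) \<notin> ord Y1" using Par.prems(3) 3 L base_key[OF \<open>base_act l1 = Some (Vis l, k)\<close>] base_key[OF \<open>base_act l2 = Some (Vis (coname l), k)\<close>] by simp
      obtain X0' where h1: "fwd X0 t1 X0'" "fwd X0' l1 X1" "indep t1 l1"
        using Par.IH(1)[OF \<open>fwd X0 l1 X\<close> \<open>fwd X t1 X1\<close> no1] by blast
      obtain Y0' where h2: "fwd Y0 t2 Y0'" "fwd Y0' l2 Y1" "indep t2 l2"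
        using Par.IH(2)[OF \<open>fwd Y0 l2 Y\<close> \<open>fwd Y t2 Y1\<close> no2] by blast
      have "fwd A' th (Par X0' Y0')" using fwd.syn[OF h1(1) h2(1)] 3 L by simp
      moreover have "fwd (Par X0' Y0') lam B" using fwd.syn[OF h1(2) h2(2)] 3 L by simp
      moreover have "indep th lam" using indep.S3[OF h1(3) h2(3)] 3 L by simp
      ultimately show ?thesis by blast
    qed
  qed
qed

lemma tinv_simps[simp]: "src (tinv t) = tgt t" "tgt (tinv t) = src t" "lbl (tinv t) = lbl t"
  "isfwd (tinv t) = (\<not> isfwd t)" "tinv (tinv t) = t"
  by (auto simp: tinv_def src_def tgt_def lbl_def isfwd_def)

lemma tup_simps[simp]: "src (A,th,d,C) = A" "tgt (A,th,d,C) = C" "lbl (A,th,d,C) = th" "isfwd (A,th,d,C) = d"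
  by (auto simp: src_def tgt_def lbl_def isfwd_def)

lemma tinv_tup[simp]: "tinv (A,th,d,C) = (C,th,\<not>d,A)" by (simp add: tinv_def)

lemma valid_tup: "valid (A,th,d,C) \<longleftrightarrow> (if d then fwd A th C else fwd C th A)"
  by (simp add: valid_def bwd_def)

lemma valid_tinv[simp]: "valid (tinv t) = valid t"
  by (cases t) (auto simp: valid_tup)

lemma diamond_tinv: "diamond t t' \<Longrightarrow> diamond (tinv t') (tinv t)"
proof (induction rule: diamond.induct)
  case (1 P tht dt Q thu du R S)
  have v1: "valid (S, tht, \<not>dt, R)" using 1(4) valid_tinv[of "(R,tht,dt,S)"] by simp
  have v2: "valid (S, thu, \<not>du, Q)" using 1(3) valid_tinv[of "(Q,thu,du,S)"] by simp
  have v3: "valid (R, thu, \<not>du, P)" using 1(2) valid_tinv[of "(P,thu,du,R)"] by simp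
  have v4: "valid (Q, tht, \<not>dt, P)" using 1(1) valid_tinv[of "(P,tht,dt,Q)"] by simp
  have c: "connected (S, tht, \<not>dt, R) (S, thu, \<not>du, Q)"
    unfolding connected_def using v2 by (intro disjI1 exI[of _ "[(S, thu, \<not>du, Q)]"]) simp
  have i: "indep tht thu" using 1(5) unfolding indep_trans_def by simp
  have "diamond (S, tht, \<not>dt, R) (Q, tht, \<not>dt, P)"
    using diamond.intros[OF v1 v2 v3 v4] c i unfolding indep_trans_def by simp
  then show ?case by simp
qed

lemma diamond_valid: "diamond t t' \<Longrightarrow> valid t \<and> valid t'"
  by (induction rule: diamond.induct) auto

lemma tsim_refl: "valid t \<Longrightarrow> tsim t t" by (simp add: tsim_def)
lemma tsim_sym: "tsim t t' \<Longrightarrow> tsim t' t" by (auto simp: tsim_def intro: equivclp_sym)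
lemma tsim_trans: "tsim t t' \<Longrightarrow> tsim t' t'' \<Longrightarrow> tsim t t''" by (auto simp: tsim_def intro: equivclp_trans)
lemma tsim_diamond: "diamond t t' \<Longrightarrow> tsim t t'"
  using diamond_valid[of t t'] by (auto simp: tsim_def)

lemma tsim_tinv: "tsim t t' \<Longrightarrow> tsim (tinv t) (tinv t')"
proof -
  assume a: "tsim t t'"
  have "equivclp diamond t t'" using a by (simp add: tsim_def)
  then have "equivclp diamond (tinv t) (tinv t')"
  proof (induction rule: equivclp_induct)
    case base then show ?case by simp
  next
    case (step y z)
    then have "diamond (tinv z) (tinv y) \<or> diamond (tinv y) (tinv z)"
      using diamond_tinv by blast
    then show ?case using step.IH equivclp_into_equivclp by metis
  qed
  then show ?thesis using a by (simp add: tsim_def)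
qed

definition delta :: "'n trans \<Rightarrow> 'n plab \<times> bool \<times> 'n proc" where
  "delta t = (lbl t, isfwd t, if isfwd t then restr (tgt t) (pkey (lbl t)) else restr (src t) (pkey (lbl t)))"

lemma valid_wl: "valid (A,th,d,C) \<Longrightarrow> wl th"
  by (cases d) (auto simp: valid_tup dest: fwd_wl)

lemma valid_restr: "valid (A,th,d,C) \<Longrightarrow> k \<noteq> pkey th \<Longrightarrow> restr A k = restr C k"
  by (cases d) (auto simp: valid_tup dest: restr_fwd)

lemma diamond_delta: "diamond t t' \<Longrightarrow> delta t = delta t'"
proof (induction rule: diamond.induct)
  case (1 P tht dt Q thu du R S)
  have i: "indep tht thu" using 1(5) unfolding indep_trans_def by simp
  have k: "pkey tht \<noteq> pkey thu" using indep_key[OF i valid_wl[OF 1(1)] valid_wl[OF 1(2)]] .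
  have a: "restr Q (pkey tht) = restr S (pkey tht)" using valid_restr[OF 1(3) k] .
  have b: "restr P (pkey tht) = restr R (pkey tht)" using valid_restr[OF 1(2) k] .
  show ?case using a b by (simp add: delta_def)
qed

lemma tsim_delta: "tsim t t' \<Longrightarrow> delta t = delta t'"
proof -
  assume "tsim t t'"
  then have "equivclp diamond t t'" by (simp add: tsim_def)
  then show ?thesis
  proof (induction rule: equivclp_induct)
    case base then show ?case by simp
  next
    case (step y z) then show ?case using diamond_delta by metis
  qed
qed

lemma tsim_lbl: "tsim t t' \<Longrightarrow> lbl t' = lbl t \<and> isfwd t' = isfwd t"
  using tsim_delta[of t t'] by (simp add: delta_def)

lemma reduce: "card (keys B - down B (pkey th)) = n \<Longrightarrow> fwd A th B \<Longrightarrow> Inv A \<Longrightarrow>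
  \<exists>A0. tsim (A,th,True,B) (A0,th,True,restr B (pkey th))"
proof (induction n arbitrary: A B)
  case 0
  have "finite (keys B - down B (pkey th))" using keys_finite by blast
  then have "keys B \<subseteq> down B (pkey th)" using 0 by auto
  then have "restr B (pkey th) = B" unfolding restr_def using erase_id by blast
  then show ?case using tsim_refl[of "(A,th,True,B)"] 0 by (auto simp: valid_tup)
next
  case (Suc n)
  let ?k = "pkey th"
  let ?S = "keys B - down B ?k"
  have "?S \<noteq> {}"
  proof
    assume e: "?S = {}"
    have "card ?S = 0" by (simp only: e card.empty)
    then show False using Suc.prems(1) by simp
  qed
  then obtain x where "x \<in> ?S" by blast
  have iB: "Inv B" using Inv_fwd[OF Suc.prems(2,3)] .
  obtain z where z: "z \<in> ?S" "\<forall>y. (z,y) \<in> ord B \<longrightarrow> y \<notin> ?S"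
    using exists_max[of "ord B" x ?S] iB ord_finite \<open>x \<in> ?S\<close> unfolding Inv_def by blast
  have nz: "\<forall>y. (z,y) \<notin> ord B"
  proof (intro allI notI)
    fix y assume zy: "(z,y) \<in> ord B"
    then have "y \<in> keys B" using ord_sub by blast
    then have "y \<in> down B ?k" using z zy by blast
    then have "(z, ?k) \<in> (ord B)\<^sup>*" using zy unfolding down_def by auto
    then show False using z(1) unfolding down_def by auto
  qed
  have kd: "?k \<in> down B ?k" unfolding down_def by simp
  have zk: "z \<noteq> ?k" using z(1) kd by blast
  have zA: "z \<in> keys A" using fwd_keys[OF Suc.prems(2)] z(1) zk by auto
  have nzA: "\<forall>y. (z,y) \<notin> ord A" using nz fwd_ord[OF Suc.prems(2)] by blast
  obtain A' lam where r: "fwd A' lam A" "pkey lam = z"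
    using removal[of A z] Suc.prems(3) zA nzA unfolding Inv_def by blast
  obtain B' where sq: "fwd A' th B'" "fwd B' lam B" "indep th lam"
    using square[OF r(1) Suc.prems(2)] nz r(2) by blast
  have d: "diamond (A,th,True,B) (A',th,True,B')"
  proof (rule diamond.intros)
    show "valid (A, th, True, B)" using Suc.prems(2) by (simp add: valid_tup)
    show "valid (A, lam, False, A')" using r(1) by (simp add: valid_tup)
    show "valid (B, lam, False, B')" using sq(2) by (simp add: valid_tup)
    show "valid (A', th, True, B')" using sq(1) by (simp add: valid_tup)
    show "indep_trans (A, th, True, B) (A, lam, False, A')"
      unfolding indep_trans_def connected_def using sq(3) r(1)
      by (auto intro!: exI[of _ "[(A, lam, False, A')]"] simp: valid_tup)
  qed
  have iA': "Inv A'" using Inv_back[OF r(1) Suc.prems(3)] .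
  have rB: "restr B' ?k = restr B ?k" using restr_fwd[OF sq(2)] zk r(2) by simp
  have dB: "down B ?k = down B' ?k" using down_fwd[OF sq(2)] zk r(2) by simp
  have kB: "keys B = insert z (keys B')" using fwd_keys[OF sq(2)] r(2) by simp
  have "keys B' - down B' ?k = ?S - {z}" using kB dB fwd_keys[OF sq(2)] r(2) by auto
  then have "card (keys B' - down B' ?k) = n" using Suc.prems(1) z(1) keys_finite
    by (simp add: card_Diff_singleton)
  then obtain A0 where "tsim (A',th,True,B') (A0,th,True,restr B' ?k)"
    using Suc.IH[OF _ sq(1) iA'] by blast
  then have "tsim (A,th,True,B) (A0,th,True,restr B ?k)" using tsim_trans[OF tsim_diamond[OF d]] rB by simp
  then show ?case by blast
qed

lemma complete: "fwd A1 th1 B1 \<Longrightarrow> fwd A2 th2 B2 \<Longrightarrow> Inv A1 \<Longrightarrow> Inv A2 \<Longrightarrow> pkey th1 = pkey th2 \<Longrightarrow>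
  restr B1 (pkey th1) = restr B2 (pkey th2) \<Longrightarrow> tsim (A1,th1,True,B1) (A2,th2,True,B2)"
proof -
  assume f1: "fwd A1 th1 B1" and f2: "fwd A2 th2 B2" and i1: "Inv A1" and i2: "Inv A2"
    and k: "pkey th1 = pkey th2" and r: "restr B1 (pkey th1) = restr B2 (pkey th2)"
  obtain C1 where c1: "tsim (A1,th1,True,B1) (C1,th1,True,restr B1 (pkey th1))"
    using reduce[OF refl f1 i1] by blast
  obtain C2 where c2: "tsim (A2,th2,True,B2) (C2,th2,True,restr B2 (pkey th2))"
    using reduce[OF refl f2 i2] by blast
  have v1: "fwd C1 th1 (restr B1 (pkey th1))" using c1 by (simp add: tsim_def valid_tup)
  have v2: "fwd C2 th2 (restr B1 (pkey th1))" using c2 r by (simp add: tsim_def valid_tup)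
  have e: "C1 = C2 \<and> th1 = th2" using fwd_bdet[OF v1 v2 k] .
  have "tsim (C1,th1,True,restr B1 (pkey th1)) (A2,th2,True,B2)" using tsim_sym[OF c2] e r by simp
  then show ?thesis using tsim_trans[OF c1] by blast
qed

lemma eclass_mem: "t' \<in> eclass t \<longleftrightarrow> tsim t t'" by (simp add: eclass_def)
lemma eclass_self: "valid t \<Longrightarrow> t \<in> eclass t" by (simp add: eclass_def tsim_refl)
lemma eclass_eq: "tsim a b \<Longrightarrow> eclass a = eclass b"
  unfolding eclass_def using tsim_sym tsim_trans by blast

lemma eclass_lbl: "u \<in> eclass t \<Longrightarrow> lbl u = lbl t \<and> isfwd u = isfwd t"
  using tsim_lbl eclass_mem by blast

lemma some_eclass: "valid t \<Longrightarrow> lbl (SOME x. x \<in> eclass t) = lbl t"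
proof -
  assume v: "valid t"
  have "(SOME x. x \<in> eclass t) \<in> eclass t" using someI[of "\<lambda>x. x \<in> eclass t" t] eclass_self[OF v] by blast
  then show ?thesis using eclass_lbl by blast
qed

lemma ev_lab_eclass: "valid t \<Longrightarrow> ev_lab (eclass t) = plab_act (lbl t)"
proof -
  assume "valid t"
  then have "lbl (SOME x. x \<in> eclass t) = lbl t" by (rule some_eclass)
  then show ?thesis unfolding ev_lab_def by simp
qed
lemma ev_key_eclass: "valid t \<Longrightarrow> ev_key (eclass t) = pkey (lbl t)"
proof -
  assume "valid t"
  then have "lbl (SOME x. x \<in> eclass t) = lbl t" by (rule some_eclass)
  then show ?thesis unfolding ev_key_def by simp
qed

lemma ev_bar_eclass: "valid t \<Longrightarrow> ev_bar (eclass t) = eclass (tinv t)"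
proof -
  assume v: "valid t"
  let ?t1 = "SOME x. x \<in> eclass t"
  have "?t1 \<in> eclass t" using someI[of "\<lambda>x. x \<in> eclass t" t] eclass_self[OF v] by blast
  then have "tsim t ?t1" by (simp add: eclass_mem)
  then have "tsim (tinv t) (tinv ?t1)" by (rule tsim_tinv)
  then show ?thesis unfolding ev_bar_def using eclass_eq by metis
qed

lemma mem_eclass_tinv: "u \<in> eclass (tinv t) \<longleftrightarrow> tinv u \<in> eclass t"
  unfolding eclass_mem using tsim_tinv by fastforce

definition Nf :: "'n proc \<Rightarrow> 'n trans set \<Rightarrow> bool" where
  "Nf X e \<longleftrightarrow> (\<exists>t1\<in>e. isfwd t1 \<and> Inv (src t1) \<and> pkey (lbl t1) \<in> keys X
      \<and> restr (tgt t1) (pkey (lbl t1)) = restr X (pkey (lbl t1)))"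

definition N :: "'n proc \<Rightarrow> 'n trans set \<Rightarrow> int" where
  "N X e = (if Nf X e then 1 else 0)"

lemma F1:
  assumes f: "fwd A ph C" and e: "e = eclass t0" and k: "pkey ph \<noteq> pkey (lbl t0)"
  shows "Nf C e \<longleftrightarrow> Nf A e"
proof -
  have kk: "\<And>t1. t1 \<in> e \<Longrightarrow> pkey (lbl t1) = pkey (lbl t0)" using e eclass_lbl by metis
  have r: "restr C (pkey (lbl t0)) = restr A (pkey (lbl t0))" using restr_fwd[OF f] k by simp
  have ks: "pkey (lbl t0) \<in> keys C \<longleftrightarrow> pkey (lbl t0) \<in> keys A" using fwd_keys[OF f] k by auto
  show ?thesis unfolding Nf_def using kk r ks by metis
qed

lemma F2:
  assumes f: "fwd A ph C" and i: "Inv A" and e: "e = eclass t0" and k: "pkey ph = pkey (lbl t0)"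
  shows "\<not> Nf A e \<and> (Nf C e \<longleftrightarrow> (A,ph,True,C) \<in> e)"
proof -
  have kk: "\<And>t1. t1 \<in> e \<Longrightarrow> pkey (lbl t1) = pkey (lbl t0)" using e eclass_lbl by metis
  have nA: "pkey ph \<notin> keys A" using fwd_keys[OF f] by blast
  have "\<not> Nf A e" unfolding Nf_def using kk nA k by metis
  moreover have "Nf C e \<longleftrightarrow> (A,ph,True,C) \<in> e"
  proof
    assume "(A,ph,True,C) \<in> e"
    moreover have "pkey ph \<in> keys C" using fwd_keys[OF f] by blast
    ultimately show "Nf C e" unfolding Nf_def using i by (intro bexI[of _ "(A,ph,True,C)"]) auto
  next
    assume "Nf C e"
    then obtain t1 where t1: "t1 \<in> e" "isfwd t1" "Inv (src t1)"
      "restr (tgt t1) (pkey (lbl t1)) = restr C (pkey (lbl t1))" unfolding Nf_def by blast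
    obtain A1 th1 d1 B1 where tt: "t1 = (A1,th1,d1,B1)" by (cases t1) auto
    have d1: "d1" using t1(2) tt by simp
    have "tsim t0 t1" using t1(1) e eclass_mem by blast
    then have v1: "valid t1" by (simp add: tsim_def)
    then have f1: "fwd A1 th1 B1" using tt d1 by (simp add: valid_tup)
    have k1: "pkey th1 = pkey ph" using kk[OF t1(1)] tt k by simp
    have "tsim (A1,th1,True,B1) (A,ph,True,C)"
      using complete[OF f1 f] t1(3,4) tt k1 i by simp
    moreover have "t1 = (A1,th1,True,B1)" using tt d1 by simp
    ultimately have "tsim t0 (A,ph,True,C)" using \<open>tsim t0 t1\<close> tsim_trans by metis
    then show "(A,ph,True,C) \<in> e" using e eclass_mem by blast
  qed
  ultimately show ?thesis by blast
qed

lemma step: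
  assumes v: "valid v" and i: "Inv (src v)" and e: "e = eclass t0" and v0: "valid t0" and f0: "isfwd t0"
  shows "N (tgt v) e - N (src v) e = (if v \<in> e then 1 else if v \<in> ev_bar e then -1 else 0)"
proof -
  obtain A ph d C where vv: "v = (A,ph,d,C)" by (cases v) auto
  have eb: "ev_bar e = eclass (tinv t0)" using ev_bar_eclass[OF v0] e by simp
  have kk: "\<And>t1. t1 \<in> e \<Longrightarrow> lbl t1 = lbl t0 \<and> isfwd t1" using e eclass_lbl f0 by metis
  show ?thesis
  proof (cases d)
    case True
    then have f: "fwd A ph C" using v vv by (simp add: valid_tup)
    have nb: "v \<notin> ev_bar e" using eb eclass_lbl[of v "tinv t0"] f0 vv True by auto
    show ?thesis
    proof (cases "pkey ph = pkey (lbl t0)")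
      case True
      have "\<not> Nf A e \<and> (Nf C e \<longleftrightarrow> (A,ph,True,C) \<in> e)" using F2[OF f _ e True] i vv by simp
      then show ?thesis using nb vv \<open>d\<close> by (auto simp: N_def)
    next
      case False
      have "Nf C e \<longleftrightarrow> Nf A e" using F1[OF f e False] .
      moreover have "v \<notin> e" using kk vv False by fastforce
      ultimately show ?thesis using nb vv by (auto simp: N_def)
    qed
  next
    case False
    then have f: "fwd C ph A" using v vv by (simp add: valid_tup)
    have iC: "Inv C" using Inv_back[OF f] i vv by simp
    have ne: "v \<notin> e" using kk vv False by fastforce
    have be: "v \<in> ev_bar e \<longleftrightarrow> (C,ph,True,A) \<in> e" using eb mem_eclass_tinv[of v t0] e vv False by simp
    show ?thesis
    proof (cases "pkey ph = pkey (lbl t0)")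
      case True
      have "\<not> Nf C e \<and> (Nf A e \<longleftrightarrow> (C,ph,True,A) \<in> e)" using F2[OF f iC e True] .
      then show ?thesis using ne be vv by (auto simp: N_def)
    next
      case F: False
      have "Nf A e \<longleftrightarrow> Nf C e" using F1[OF f e F] .
      moreover have "(C,ph,True,A) \<notin> e" using kk F by fastforce
      ultimately show ?thesis using ne be vv by (auto simp: N_def)
    qed
  qed
qed

lemma chain_Inv_back: "chain P ts X \<Longrightarrow> Inv X \<Longrightarrow> Inv P"
proof (induction ts arbitrary: P)
  case Nil then show ?case by simp
next
  case (Cons v ts)
  have c: "valid v" "src v = P" "chain (tgt v) ts X" using Cons.prems(1) by auto
  have it: "Inv (tgt v)" using Cons.IH[OF c(3) Cons.prems(2)] .
  obtain A ph d C where vv: "v = (A,ph,d,C)" by (cases v) auto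
  show ?case
  proof (cases d)
    case True then show ?thesis using Inv_back[of A ph C] c vv it by (simp add: valid_tup)
  next
    case False then show ?thesis using Inv_fwd[of C ph A] c vv it by (simp add: valid_tup)
  qed
qed

lemma sharp_N:
  assumes e: "e = eclass t0" and v0: "valid t0" and f0: "isfwd t0"
  shows "chain P ts X \<Longrightarrow> Inv X \<Longrightarrow> sharp ts e = N X e - N P e"
proof (induction ts arbitrary: P)
  case Nil then show ?case by (simp add: sharp_def)
next
  case (Cons v ts)
  have c: "valid v" "src v = P" "chain (tgt v) ts X" using Cons.prems(1) by auto
  have iP: "Inv P" using chain_Inv_back[OF Cons.prems] .
  have s: "sharp (v # ts) e = (if v \<in> e then 1 else if v \<in> ev_bar e then -1 else 0) + sharp ts e"
    by (simp add: sharp_def)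
  have "N (tgt v) e - N (src v) e = (if v \<in> e then 1 else if v \<in> ev_bar e then -1 else 0)"
    using step[OF c(1) _ e v0 f0] iP c(2) by simp
  then show ?case using s Cons.IH[OF c(3) Cons.prems(2)] c(2) by simp
qed

lemma rooted_N: "rooted P \<Longrightarrow> Inv P \<Longrightarrow> N P e = 0"
  using rooted_std[of P] unfolding N_def Nf_def by auto

lemma EV:
  assumes i: "Inv X" and r: "rooted P0" "chain P0 ts0 X"
  shows "ev X = {e. fwd_event e \<and> Nf X e}"
proof (intro set_eqI iffI)
  fix e assume "e \<in> ev X"
  then obtain P ts where h: "fwd_event e" "rooted P" "chain P ts X" "sharp ts e > 0"
    unfolding ev_def by blast
  obtain t0 where t0: "valid t0" "isfwd t0" "e = eclass t0" using h(1) unfolding fwd_event_def by blast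
  have "Inv P" using chain_Inv_back[OF h(3) i] .
  then have "sharp ts e = N X e" using sharp_N[OF t0(3,1,2) h(3) i] rooted_N[OF h(2)] by simp
  then show "e \<in> {e. fwd_event e \<and> Nf X e}" using h(1,4) by (auto simp: N_def split: if_splits)
next
  fix e assume a: "e \<in> {e. fwd_event e \<and> Nf X e}"
  obtain t0 where t0: "valid t0" "isfwd t0" "e = eclass t0" using a unfolding fwd_event_def by blast
  have "Inv P0" using chain_Inv_back[OF r(2) i] .
  then have "sharp ts0 e = N X e" using sharp_N[OF t0(3,1,2) r(2) i] rooted_N[OF r(1)] by simp
  then have "sharp ts0 e > 0" using a by (simp add: N_def)
  then show "e \<in> ev X" unfolding ev_def using a r by blast
qed

lemma std_rooted: "keys P = {} \<Longrightarrow> rooted P"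
  unfolding rooted_def bwd_def using fwd_keys by blast

lemma ev_std: "keys P = {} \<Longrightarrow> ev P = {}"
proof -
  assume k: "keys P = {}"
  have "ev P = {e. fwd_event e \<and> Nf P e}" using EV[OF Inv_std[OF k] std_rooted[OF k], of "[]"] by simp
  then show ?thesis using k unfolding Nf_def by auto
qed

lemma chain_snoc: "chain P ts X \<Longrightarrow> valid t \<Longrightarrow> src t = X \<Longrightarrow> chain P (ts @ [t]) (tgt t)"
  by (induction ts arbitrary: P) auto

lemma ev_step:
  assumes f: "fwd X th Y" and i: "Inv X" and r: "rooted P0" "chain P0 ts0 X"
  shows "ev Y = insert (eclass (X,th,True,Y)) (ev X) \<and> eclass (X,th,True,Y) \<notin> ev X"
proof -
  let ?t = "(X,th,True,Y)"
  have vt: "valid ?t" using f by (simp add: valid_tup)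
  have iY: "Inv Y" using Inv_fwd[OF f i] .
  have cY: "chain P0 (ts0 @ [?t]) Y" using chain_snoc[OF r(2) vt] by simp
  have eX: "ev X = {e. fwd_event e \<and> Nf X e}" using EV[OF i r] .
  have eY: "ev Y = {e. fwd_event e \<and> Nf Y e}" using EV[OF iY r(1) cY] .
  have fe: "fwd_event (eclass ?t)" unfolding fwd_event_def using vt by auto
  have key: "fwd_event e \<Longrightarrow> (Nf Y e \<longleftrightarrow> Nf X e \<or> e = eclass ?t) \<and> (e = eclass ?t \<longrightarrow> \<not> Nf X e)" for e
  proof -
    assume "fwd_event e"
    then obtain t0 where t0: "valid t0" "isfwd t0" "e = eclass t0" unfolding fwd_event_def by blast
    have nb: "?t \<notin> ev_bar e" using ev_bar_eclass[OF t0(1)] t0 eclass_lbl[of ?t "tinv t0"] by auto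
    have s: "N Y e - N X e = (if ?t \<in> e then 1 else 0)" using step[OF vt _ t0(3,1,2)] i nb by simp
    have te: "?t \<in> e \<longleftrightarrow> e = eclass ?t"
    proof
      assume "?t \<in> e" then show "e = eclass ?t" using t0(3) eclass_mem eclass_eq by blast
    next
      assume "e = eclass ?t" then show "?t \<in> e" using eclass_self[OF vt] by simp
    qed
    show ?thesis using s te by (auto simp: N_def split: if_splits)
  qed
  show ?thesis using eX eY key fe by auto
qed

inductive canrm :: "'n proc \<Rightarrow> nat \<Rightarrow> nat \<Rightarrow> bool" where
  r1: "fwd X' th X \<Longrightarrow> pkey th = k1 \<Longrightarrow> canrm X k1 k2"
| r2: "fwd X' th X \<Longrightarrow> pkey th \<noteq> k2 \<Longrightarrow> canrm X' k1 k2 \<Longrightarrow> canrm X k1 k2"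

lemma le_not_canrm: "canrm X k1 k2 \<Longrightarrow> k1 \<noteq> k2 \<Longrightarrow> (k1,k2) \<in> (ord X)\<^sup>* \<Longrightarrow> k2 \<in> keys X \<Longrightarrow> False"
proof (induction rule: canrm.induct)
  case (r1 X' th X k1 k2)
  then show ?case using fwd_nout_rt[OF r1.hyps(1)] by blast
next
  case (r2 X' th X k2 k1)
  have "k2 \<noteq> pkey th" using r2.hyps(2) by simp
  then have "(k1,k2) \<in> (ord X')\<^sup>*" using fwd_down[OF r2.hyps(1), of k2 k1] r2.prems(2) by simp
  moreover have "k2 \<in> keys X'" using fwd_keys[OF r2.hyps(1)] r2.hyps(2) r2.prems(3) by auto
  ultimately show ?case using r2.IH r2.prems(1) by blast
qed

lemma not_le_canrm_aux: "card {x\<in>keys X. (k1,x) \<in> (ord X)\<^sup>*} = n \<Longrightarrow> Inv X \<Longrightarrow> k1 \<in> keys X \<Longrightarrow> k2 \<in> keys X \<Longrightarrow>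
   k1 \<noteq> k2 \<Longrightarrow> (k1,k2) \<notin> (ord X)\<^sup>* \<Longrightarrow> canrm X k1 k2"
proof (induction n arbitrary: X rule: less_induct)
  case (less n)
  let ?U = "{x\<in>keys X. (k1,x) \<in> (ord X)\<^sup>*}"
  have k1U: "k1 \<in> ?U" using less.prems(3) by simp
  obtain z where z: "z \<in> ?U" "\<forall>y. (z,y) \<in> ord X \<longrightarrow> y \<notin> ?U"
    using exists_max[of "ord X" k1 ?U] less.prems(2) ord_finite k1U unfolding Inv_def by blast
  have nz: "\<forall>y. (z,y) \<notin> ord X"
  proof (intro allI notI)
    fix y assume zy: "(z,y) \<in> ord X"
    then have "y \<in> keys X" using ord_sub by blast
    moreover have "(k1,y) \<in> (ord X)\<^sup>*" using z(1) zy by auto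
    ultimately show False using z(2) zy by blast
  qed
  obtain X' th where r: "fwd X' th X" "pkey th = z"
    using removal[of X z] less.prems(2) z(1) nz unfolding Inv_def by blast
  show ?case
  proof (cases "z = k1")
    case True then show ?thesis using canrm.r1[OF r(1)] r(2) by simp
  next
    case False
    have z2: "z \<noteq> k2" using z(1) less.prems(6) by auto
    have iX': "Inv X'" using Inv_back[OF r(1) less.prems(2)] .
    have kX: "keys X = insert z (keys X')" using fwd_keys[OF r(1)] r(2) by simp
    have k1': "k1 \<in> keys X'" using kX less.prems(3) False by auto
    have k2': "k2 \<in> keys X'" using kX less.prems(4) z2 by auto
    have oo: "ord X' \<subseteq> ord X" using fwd_ord[OF r(1)] by blast
    have n12: "(k1,k2) \<notin> (ord X')\<^sup>*" using less.prems(6) rtrancl_mono[OF oo] by blast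
    let ?U' = "{x\<in>keys X'. (k1,x) \<in> (ord X')\<^sup>*}"
    have "?U' \<subseteq> ?U - {z}" using kX rtrancl_mono[OF oo] fwd_keys[OF r(1)] r(2) by auto
    moreover have "finite ?U" by (rule finite_subset[OF _ keys_finite]) auto
    ultimately have "card ?U' < card ?U" using z(1) by (meson Diff_iff card_mono finite_Diff insertI1 le_less_trans card_Diff1_less)
    then have "card ?U' < n" using less.prems(1) by simp
    then have "canrm X' k1 k2" using less.IH[OF _ refl iX' k1' k2' less.prems(5) n12] by blast
    then show ?thesis using canrm.r2[OF r(1)] r(2) z2 by simp
  qed
qed

lemma key_le_char: "Inv X \<Longrightarrow> key_le X k1 k2 \<longleftrightarrow> k1 \<in> keys X \<and> k2 \<in> keys X \<and> (k1 = k2 \<or> \<not> canrm X k1 k2)"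
  unfolding key_le_def using le_not_canrm not_le_canrm_aux[OF refl] by blast

lemma canrm_transfer:
  assumes H: "\<forall>X' Y'. S X' Y' \<longrightarrow> (\<forall>th X''. fwd X'' th X' \<longrightarrow> (\<exists>th' Y''. fwd Y'' th' Y' \<and> pkey th = pkey th' \<and> S X'' Y''))"
  shows "canrm X k1 k2 \<Longrightarrow> S X Y \<Longrightarrow> canrm Y k1 k2"
proof (induction arbitrary: Y rule: canrm.induct)
  case (r1 X' th X k1 k2)
  then obtain th' Y'' where "fwd Y'' th' Y" "pkey th = pkey th'" using H by blast
  then show ?case using canrm.r1 r1.hyps(2) by metis
next
  case (r2 X' th X k2 k1)
  then obtain th' Y'' where h: "fwd Y'' th' Y" "pkey th = pkey th'" "S X' Y''" using H by blast
  then show ?case using canrm.r2[OF h(1)] r2.hyps(2) r2.IH by metis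
qed

lemma chain_Inv_fwd: "chain P ts X \<Longrightarrow> Inv P \<Longrightarrow> Inv X"
proof (induction ts arbitrary: P)
  case Nil then show ?case by simp
next
  case (Cons v ts)
  have c: "valid v" "src v = P" "chain (tgt v) ts X" using Cons.prems(1) by auto
  obtain A ph d C where vv: "v = (A,ph,d,C)" by (cases v) auto
  have "Inv (tgt v)"
  proof (cases d)
    case True then show ?thesis using Inv_fwd[of A ph C] c vv Cons.prems(2) by (simp add: valid_tup)
  next
    case False then show ?thesis using Inv_back[of C ph A] c vv Cons.prems(2) by (simp add: valid_tup)
  qed
  then show ?case using Cons.IH[OF c(3)] by blast
qed

lemma orig_std: "keys X = {} \<Longrightarrow> orig X = X" by (induction X) auto

lemma bij_rel_insert: "bij_rel f A B \<Longrightarrow> a \<notin> A \<Longrightarrow> b \<notin> B \<Longrightarrow> bij_rel (f \<union> {(a,b)}) (insert a A) (insert b B)"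
  unfolding bij_rel_def by blast

theorem proposition7p18:
  fixes P Q :: "'n proc"
  assumes "standard P" and "standard Q"
    and "FR_equiv P Q"
  shows "KP_equiv P Q"
proof -
  have kP: "keys P = {}" and kQ: "keys Q = {}" using assms(1,2) by (simp_all add: standard_def)
  obtain Rf where fr: "FR_bisim Rf P Q" using assms(3) unfolding FR_equiv_def by blast
  have RPQ: "Rf P Q" using fr unfolding FR_bisim_def by blast
  have H1: "\<And>X' Y' th X''. Rf X' Y' \<Longrightarrow> fwd X' th X'' \<Longrightarrow> \<exists>th' Y''. fwd Y' th' Y'' \<and>
          plab_act th = plab_act th' \<and> pkey th = pkey th' \<and> Rf X'' Y''"
    using fr unfolding FR_bisim_def by blast
  have H2: "\<And>X' Y' th' Y''. Rf X' Y' \<Longrightarrow> fwd Y' th' Y'' \<Longrightarrow> \<exists>th X''. fwd X' th X'' \<and>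
          plab_act th = plab_act th' \<and> pkey th = pkey th' \<and> Rf X'' Y''"
    using fr unfolding FR_bisim_def by blast
  have H3: "\<forall>X' Y'. Rf X' Y' \<longrightarrow> (\<forall>th X''. fwd X'' th X' \<longrightarrow> (\<exists>th' Y''. fwd Y'' th' Y' \<and> pkey th = pkey th' \<and> Rf X'' Y''))"
    using fr unfolding FR_bisim_def bwd_def by metis
  have H4: "\<forall>X' Y'. (\<lambda>a b. Rf b a) X' Y' \<longrightarrow> (\<forall>th X''. fwd X'' th X' \<longrightarrow> (\<exists>th' Y''. fwd Y'' th' Y' \<and> pkey th = pkey th' \<and> (\<lambda>a b. Rf b a) X'' Y''))"
    using fr unfolding FR_bisim_def bwd_def by metis
  define RR where "RR = {(X', Y', f). Rf X' Y' \<and> (\<exists>ts. chain P ts X') \<and> (\<exists>ts. chain Q ts Y')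
      \<and> bij_rel f (ev X') (ev Y') \<and> (\<forall>(e,d)\<in>f. ev_lab e = ev_lab d \<and> ev_key e = ev_key d) \<and> keys X' = keys Y'}"
  have rP: "rooted P" using std_rooted[OF kP] .
  have rQ: "rooted Q" using std_rooted[OF kQ] .
  have init: "(P,Q,{}) \<in> RR" unfolding RR_def using RPQ ev_std[OF kP] ev_std[OF kQ] kP kQ
    by (auto simp: bij_rel_def intro: exI[of _ "[]"])
  have mem: "bij_rel f (ev X') (ev Y') \<and> label_pres f \<and> order_pres X' Y' f \<and>
       (\<forall>th X''. fwd X' th X'' \<longrightarrow>
          (\<exists>th' Y''. fwd Y' th' Y'' \<and>
             (X'', Y'', f \<union> {(eclass (X', th, True, X''), eclass (Y', th', True, Y''))}) \<in> RR)) \<and>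
       (\<forall>th' Y''. fwd Y' th' Y'' \<longrightarrow>
          (\<exists>th X''. fwd X' th X'' \<and>
             (X'', Y'', f \<union> {(eclass (X', th, True, X''), eclass (Y', th', True, Y''))}) \<in> RR))"
    if m: "(X', Y', f) \<in> RR" for X' Y' f
  proof -
    have R: "Rf X' Y'" and bj: "bij_rel f (ev X') (ev Y')"
      and lk: "\<forall>(e,d)\<in>f. ev_lab e = ev_lab d \<and> ev_key e = ev_key d" and ke: "keys X' = keys Y'"
      using m unfolding RR_def by auto
    obtain ts1 where c1: "chain P ts1 X'" using m unfolding RR_def by auto
    obtain ts2 where c2: "chain Q ts2 Y'" using m unfolding RR_def by auto
    have iX: "Inv X'" using chain_Inv_fwd[OF c1 Inv_std[OF kP]] .
    have iY: "Inv Y'" using chain_Inv_fwd[OF c2 Inv_std[OF kQ]] .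
    have lp: "label_pres f" using lk unfolding label_pres_def by auto
    have kl: "key_le X' a b \<longleftrightarrow> key_le Y' a b" for a b
    proof -
      have "canrm X' a b \<longleftrightarrow> canrm Y' a b"
        using canrm_transfer[OF H3, of X' a b Y'] canrm_transfer[OF H4, of Y' a b X'] R by blast
      then show ?thesis using key_le_char[OF iX] key_le_char[OF iY] ke by simp
    qed
    have op: "order_pres X' Y' f" unfolding order_pres_def
    proof (intro ballI, clarify)
      fix e1 d1 e2 d2 assume a: "(e1,d1) \<in> f" "(e2,d2) \<in> f"
      then have "ev_key e1 = ev_key d1" "ev_key e2 = ev_key d2" using lk by auto
      then show "key_le X' (ev_key e1) (ev_key e2) = key_le Y' (ev_key d1) (ev_key d2)" using kl by simp
    qed
    have step: "(X'', Y'', f \<union> {(eclass (X', th, True, X''), eclass (Y', th', True, Y''))}) \<in> RR"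
      if f1: "fwd X' th X''" and f2: "fwd Y' th' Y''" and la: "plab_act th = plab_act th'"
        and ky: "pkey th = pkey th'" and R2: "Rf X'' Y''" for th th' X'' Y''
    proof -
      let ?t = "(X', th, True, X'')"
      let ?u = "(Y', th', True, Y'')"
      have vt: "valid ?t" using f1 by (simp add: valid_tup)
      have vu: "valid ?u" using f2 by (simp add: valid_tup)
      have s1: "ev X'' = insert (eclass ?t) (ev X') \<and> eclass ?t \<notin> ev X'" using ev_step[OF f1 iX rP c1] .
      have s2: "ev Y'' = insert (eclass ?u) (ev Y') \<and> eclass ?u \<notin> ev Y'" using ev_step[OF f2 iY rQ c2] .
      have bj2: "bij_rel (f \<union> {(eclass ?t, eclass ?u)}) (ev X'') (ev Y'')"
        using bij_rel_insert[OF bj] s1 s2 by simp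
      have lk2: "\<forall>(e,d)\<in>f \<union> {(eclass ?t, eclass ?u)}. ev_lab e = ev_lab d \<and> ev_key e = ev_key d"
        using lk ev_lab_eclass[OF vt] ev_lab_eclass[OF vu] ev_key_eclass[OF vt] ev_key_eclass[OF vu] la ky by auto
      have ke2: "keys X'' = keys Y''" using fwd_keys[OF f1] fwd_keys[OF f2] ke ky by simp
      have cc1: "chain P (ts1 @ [?t]) X''" using chain_snoc[OF c1 vt] by simp
      have cc2: "chain Q (ts2 @ [?u]) Y''" using chain_snoc[OF c2 vu] by simp
      show ?thesis unfolding RR_def using R2 cc1 cc2 bj2 lk2 ke2 by blast
    qed
    have fw1: "\<forall>th X''. fwd X' th X'' \<longrightarrow>
          (\<exists>th' Y''. fwd Y' th' Y'' \<and>
             (X'', Y'', f \<union> {(eclass (X', th, True, X''), eclass (Y', th', True, Y''))}) \<in> RR)"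
    proof (intro allI impI)
      fix th X'' assume f1: "fwd X' th X''"
      obtain th' Y'' where h: "fwd Y' th' Y''" "plab_act th = plab_act th'" "pkey th = pkey th'" "Rf X'' Y''"
        using H1[OF R f1] by blast
      show "\<exists>th' Y''. fwd Y' th' Y'' \<and>
             (X'', Y'', f \<union> {(eclass (X', th, True, X''), eclass (Y', th', True, Y''))}) \<in> RR"
        using step[OF f1 h] h(1) by blast
    qed
    have fw2: "\<forall>th' Y''. fwd Y' th' Y'' \<longrightarrow>
          (\<exists>th X''. fwd X' th X'' \<and>
             (X'', Y'', f \<union> {(eclass (X', th, True, X''), eclass (Y', th', True, Y''))}) \<in> RR)"
    proof (intro allI impI)
      fix th' Y'' assume f2: "fwd Y' th' Y''"
      obtain th X'' where h: "fwd X' th X''" "plab_act th = plab_act th'" "pkey th = pkey th'" "Rf X'' Y''"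
        using H2[OF R f2] by blast
      show "\<exists>th X''. fwd X' th X'' \<and>
             (X'', Y'', f \<union> {(eclass (X', th, True, X''), eclass (Y', th', True, Y''))}) \<in> RR"
        using step[OF h(1) f2 h(2,3,4)] h(1) by blast
    qed
    show ?thesis using bj lp op fw1 fw2 by blast
  qed
  have "KP_bisim RR P Q"
    unfolding KP_bisim_def using assms(1,2) init mem by fast
  moreover have "orig P = P" "orig Q = Q" using orig_std kP kQ by auto
  ultimately show ?thesis unfolding KP_equiv_def using init by metis
qed


end
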